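(* Let $\mathbb{A}$ be a finite-dimensional Novikov algebra over $\mathbb{C}$, and let $g_0,g_1$ be symmetric bilinear forms on $\mathbb{A}$ satisfying $g(a\cdot b,c)=g(a,c\cdot b)$, let $f_0,f_1$ be skew-symmetric bilinear forms on $\mathbb{A}$ satisfying $f(a\cdot b,c)=f(a,c\cdot b)$ and $f(a\cdot b,c)+f(b\cdot c,a)+f(c\cdot a,b)=0$, and let $h_0,h_1$ be symmetric bilinear forms on $\mathbb{A}$ for which $h(a\cdot b,c)$ is totally symmetric in $a,b,c$ (for all $a,b,c\in\mathbb{A}$). Consider the compatible Poisson operators on $\mathscr{L}_\mathbb{A}^*$ $$\mathcal{P}_1\gamma=(R^*_\gamma u)_x+L^*_{\gamma_x}u+\tilde g_1\gamma_x+\tilde f_1\gamma_{xx}+\tilde h_1\gamma_{xxx},\qquad \mathcal{P}_0\gamma=\tilde g_0\gamma_x+\tilde f_0\gamma_{xx}+\tilde h_0\gamma_{xxx},$$ ($u\in\mathscr{L}^*_\mathbb{A}$, $\gamma\in\mathscr{L}_\mathbb{A}$), and the operator $\Lambda\gamma=\tilde g_0\gamma+\tilde f_0\gamma_x+\tilde h_0\gamma_{xx}$, assumed invertible (e.g. $g_0$ nondegenerate), so that $\mathcal{P}_0\gamma=\Lambda\gamma_x$. Fix a constant $c\in\mathbb{A}$ and put $v:=\Lambda^{-1}u\in\mathscr{L}_\mathbb{A}$. Define functionals $\mathcal{H}_i[v]=\int_{\mathbb{S}^1}H_i\,dx$ ($i=0,1,2$) with densities $$H_0=g_0(c,v),\qquad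 H_1=\tfrac12 g_0(v,v\cdot c)+\tfrac12 f_0(v_x,v\cdot c)+\tfrac12 h_0(v_{xx},v\cdot c),$$ $$H_2=\tfrac13 g_0(v,v\cdot(v\cdot c))+\tfrac13 f_0(v_x,v\cdot(v\cdot c))+\tfrac13 h_0(v\cdot c,v\cdot v_{xx})+\tfrac16 g_0(v\cdot c,v\cdot v)+\tfrac16 h_0(v_x\cdot c,v_x\cdot v)+\tfrac12 g_1(v,v\cdot c)+\tfrac12 f_1(v_x,v\cdot c)+\tfrac12 h_1(v_{xx},v\cdot c),$$ regarded as functionals of $u=\Lambda v$. Then $\delta_u\mathcal{H}_0=c$ (so $\mathcal{P}_0\delta_u\mathcal{H}_0=0$), and the bi-Hamiltonian chain $u_{t_1}=\mathcal{P}_1\delta_u\mathcal{H}_0=\mathcal{P}_0\delta_u\mathcal{H}_1$, $u_{t_2}=\mathcal{P}_1\delta_u\mathcal{H}_1=\mathcal{P}_0\delta_u\mathcal{H}_2$ holds. In terms of $v$, these first two flows are $$v_{t_1}=v_x\cdot c,$$ $$\tilde g_0(v_{t_2})+\tilde f_0(v_{xt_2})+\tilde h_0(v_{xxt_2})=\tilde g_0(v_x\cdot(v\cdot c))+\tilde g_0(v\cdot(v_x\cdot c))+L^*_{v\cdot c}\tilde g_0(v_x)+\tilde f_0(v_x\cdot(v_x\cdot c))+\tilde f_0(v_{xx}\cdot(v\cdot c))+2\tilde h_0((v_x\cdot c)\cdot v_{xx})+\tilde h_0((v\cdot c)\cdot v_{xxx})+\tilde g_1(v_x\cdot c)+\tilde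 f_1(v_{xx}\cdot c)+\tilde h_1(v_{xxx}\cdot c).$$
   Context: A Novikov algebra is a complex vector space $\mathbb{A}$ with a bilinear product $\cdot$ satisfying $(a\cdot b)\cdot c=(a\cdot c)\cdot b$ and $(a\cdot b)\cdot c-a\cdot(b\cdot c)=(b\cdot a)\cdot c-b\cdot(a\cdot c)$. Write $L_ab=R_ba=a\cdot b$; $(\,,\,):\mathbb{A}^*\times\mathbb{A}\to\mathbb{C}$ is the canonical pairing, and $L_a^*,R_b^*:\mathbb{A}^*\to\mathbb{A}^*$ are defined by $(L_a^*u,b)=(R_b^*u,a)=(u,a\cdot b)$. For a bilinear form $g$ on $\mathbb{A}$, $\tilde g:\mathbb{A}\to\mathbb{A}^*$ is defined by $g(a,b)=(\tilde g(a),b)$. $\mathscr{L}_\mathbb{A}$ is the space of smooth $\mathbb{A}$-valued functions of $x\in\mathbb{S}^1$ (a Lie algebra with bracket $[a,b]=a_x\cdot b-b_x\cdot a$), $\mathscr{L}^*_\mathbb{A}$ the space of smooth $\mathbb{A}^*$-valued functions on $\mathbb{S}^1$, with pairing $\langle u,a\rangle=\int_{\mathbb{S}^1}(u,a)\,dx$; all products, $L^*,R^*$ and tilde maps act pointwise in $x$, subscripts $x$ denote $x$-derivatives. For a functional $\mathcal{H}$ on $\mathscr{L}^*_\mathbb{A}$ of the form $\int_{\mathbb{S}^1}H(u,u_x,\dots)dx$, the variational derivative $\delta_u\mathcal{H}\in\mathscr{L}_\mathbb{A}$ is defined by $\langle w,\delta_u\mathcal{H}\rangle=\frac{d}{d\varepsilon}\mathcal{H}[u+\varepsilon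 w]|_{\varepsilon=0}$. $\Lambda$ is inverted as a (pseudo-)differential operator. *)

theory Defs
  imports "HOL-Analysis.Analysis"
begin

text \<open>The finite-dimensional complex vector space A is modelled as complex^'n
  (any finite index type 'n); its dual A* is also modelled as complex^'n via
  the canonical (non-conjugated) pairing below.\<close>

type_synonym 'n vecC = "complex ^ 'n"

definition pair :: "'n::finite vecC \<Rightarrow> 'n vecC \<Rightarrow> complex" where
  "pair u a = (\<Sum>i\<in>UNIV. u $ i * a $ i)"

definition cbilin_form :: "('n::finite vecC \<Rightarrow> 'n vecC \<Rightarrow> complex) \<Rightarrow> bool" where
  "cbilin_form g \<longleftrightarrow>
     (\<forall>a a' b. g (a + a') b = g a b + g a' b) \<and>
     (\<forall>a b b'. g a (b + b') = g a b + g a b') \<and>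
     (\<forall>k a b. g (k *s a) b = k * g a b) \<and>
     (\<forall>k a b. g a (k *s b) = k * g a b)"

definition cbilin_prod :: "('n::finite vecC \<Rightarrow> 'n vecC \<Rightarrow> 'n vecC) \<Rightarrow> bool" where
  "cbilin_prod m \<longleftrightarrow>
     (\<forall>a a' b. m (a + a') b = m a b + m a' b) \<and>
     (\<forall>a b b'. m a (b + b') = m a b + m a b') \<and>
     (\<forall>k a b. m (k *s a) b = k *s m a b) \<and>
     (\<forall>k a b. m a (k *s b) = k *s m a b)"

definition novikov :: "('n::finite vecC \<Rightarrow> 'n vecC \<Rightarrow> 'n vecC) \<Rightarrow> bool" where
  "novikov m \<longleftrightarrow> cbilin_prod m \<and>
     (\<forall>a b c. m (m a b) c = m (m a c) b) \<and>
     (\<forall>a b c. m (m a b) c - m a (m b c) = m (m b a) c - m b (m a c))"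

definition tl :: "('n::finite vecC \<Rightarrow> 'n vecC \<Rightarrow> complex) \<Rightarrow> 'n vecC \<Rightarrow> 'n vecC" where
  "tl g a = (\<chi> i. g a (axis i 1))"

definition Lst :: "('n::finite vecC \<Rightarrow> 'n vecC \<Rightarrow> 'n vecC) \<Rightarrow> 'n vecC \<Rightarrow> 'n vecC \<Rightarrow> 'n vecC" where
  "Lst m a u = (\<chi> i. pair u (m a (axis i 1)))"

definition Rst :: "('n::finite vecC \<Rightarrow> 'n vecC \<Rightarrow> 'n vecC) \<Rightarrow> 'n vecC \<Rightarrow> 'n vecC \<Rightarrow> 'n vecC" where
  "Rst m b u = (\<chi> i. pair u (m (axis i 1) b))"

text \<open>Loops: smooth 1-periodic functions on R (S^1 = R/Z).\<close>
definition D :: "(real \<Rightarrow> 'n::finite vecC) \<Rightarrow> real \<Rightarrow> 'n vecC" where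
  "D f = (\<lambda>x. vector_derivative f (at x))"

definition loops :: "(real \<Rightarrow> 'n::finite vecC) set" where
  "loops = {f. (\<forall>x. f (x + 1) = f x) \<and> (\<forall>k x. (D ^^ k) f differentiable (at x))}"

definition Lam :: "('n::finite vecC \<Rightarrow> 'n vecC \<Rightarrow> complex) \<Rightarrow> ('n vecC \<Rightarrow> 'n vecC \<Rightarrow> complex)
    \<Rightarrow> ('n vecC \<Rightarrow> 'n vecC \<Rightarrow> complex) \<Rightarrow> (real \<Rightarrow> 'n vecC) \<Rightarrow> real \<Rightarrow> 'n vecC" where
  "Lam g f h \<gamma> = (\<lambda>x. tl g (\<gamma> x) + tl f (D \<gamma> x) + tl h (D (D \<gamma>) x))"

definition Lam_inv where
  "Lam_inv g f h = inv_into loops (Lam g f h)"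

definition P0 :: "('n::finite vecC \<Rightarrow> 'n vecC \<Rightarrow> complex) \<Rightarrow> ('n vecC \<Rightarrow> 'n vecC \<Rightarrow> complex)
    \<Rightarrow> ('n vecC \<Rightarrow> 'n vecC \<Rightarrow> complex) \<Rightarrow> (real \<Rightarrow> 'n vecC) \<Rightarrow> real \<Rightarrow> 'n vecC" where
  "P0 g f h \<gamma> = (\<lambda>x. tl g (D \<gamma> x) + tl f (D (D \<gamma>) x) + tl h (D (D (D \<gamma>)) x))"

definition P1 :: "('n::finite vecC \<Rightarrow> 'n vecC \<Rightarrow> 'n vecC) \<Rightarrow>
    ('n vecC \<Rightarrow> 'n vecC \<Rightarrow> complex) \<Rightarrow> ('n vecC \<Rightarrow> 'n vecC \<Rightarrow> complex)
    \<Rightarrow> ('n vecC \<Rightarrow> 'n vecC \<Rightarrow> complex) \<Rightarrow> (real \<Rightarrow> 'n vecC) \<Rightarrow> (real \<Rightarrow> 'n vecC) \<Rightarrow> real \<Rightarrow> 'n vecC" where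
  "P1 m g f h u \<gamma> = (\<lambda>x. D (\<lambda>y. Rst m (\<gamma> y) (u y)) x + Lst m (D \<gamma> x) (u x)
       + tl g (D \<gamma> x) + tl f (D (D \<gamma>) x) + tl h (D (D (D \<gamma>)) x))"

definition has_var_deriv :: "((real \<Rightarrow> 'n::finite vecC) \<Rightarrow> complex) \<Rightarrow> (real \<Rightarrow> 'n vecC)
    \<Rightarrow> (real \<Rightarrow> 'n vecC) \<Rightarrow> bool" where
  "has_var_deriv F u \<gamma> \<longleftrightarrow> \<gamma> \<in> loops \<and>
     (\<forall>w\<in>loops. ((\<lambda>\<epsilon>::complex. F (\<lambda>x. u x + \<epsilon> *s w x))
        has_field_derivative (integral {0..1} (\<lambda>x. pair (w x) (\<gamma> x)))) (at 0))"

definition functional_v where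
  "functional_v g f h dens u =
     (let v = Lam_inv g f h u in integral {0..1} (\<lambda>x. dens (v x) (D v x) (D (D v) x)))"

end

theory Submission
  imports Defs
begin

section \<open>Bilinear algebra\<close>

lemma scaleR_vecC: "r *\<^sub>R (x::'n::finite vecC) = complex_of_real r *s x"
  unfolding vec_eq_iff by (simp add: scaleR_conv_of_real[where 'a=complex])

context fixes q :: "'n::finite vecC \<Rightarrow> 'n vecC \<Rightarrow> complex" assumes q: "cbilin_form q"
begin
lemma cf_addl: "q (a + b) d = q a d + q b d" using q by (simp add: cbilin_form_def)
lemma cf_addr: "q a (b + d) = q a b + q a d" using q by (simp add: cbilin_form_def)
lemma cf_scl: "q (k *s a) d = k * q a d" using q by (simp add: cbilin_form_def)
lemma cf_scr: "q a (k *s d) = k * q a d" using q by (simp add: cbilin_form_def)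
lemma cf_zerol: "q 0 d = 0" using cf_scl[of 0 0 d] by simp
lemma cf_zeror: "q a 0 = 0" using cf_scr[of a 0 0] by simp
lemma cf_neg_l: "q (- a) d = - q a d" using cf_scl[of "-1" a d] by simp
lemma cf_neg_r: "q a (- d) = - q a d" using cf_scr[of a "-1" d] by simp
lemma cf_diffl: "q (a - b) d = q a d - q b d" using cf_addl[of a "-b" d] cf_neg_l by simp
lemma cf_diffr: "q a (b - d) = q a b - q a d" using cf_addr[of a b "-d"] cf_neg_r by simp
lemma cf_sumr: "q a (sum F S) = (\<Sum>i\<in>S. q a (F i))"
  by (induction S rule: infinite_finite_induct) (auto simp: cf_zeror cf_addr)
lemma cf_bb: "bounded_bilinear q"
  unfolding bilinear_conv_bounded_bilinear[symmetric] bilinear_def linear_iff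
  by (simp add: scaleR_vecC cf_addl cf_addr cf_scl cf_scr scaleR_conv_of_real)
end

context fixes q :: "'n::finite vecC \<Rightarrow> 'n vecC \<Rightarrow> 'n vecC" assumes q: "cbilin_prod q"
begin
lemma cp_addl: "q (a + b) d = q a d + q b d" using q by (simp add: cbilin_prod_def)
lemma cp_addr: "q a (b + d) = q a b + q a d" using q by (simp add: cbilin_prod_def)
lemma cp_scl: "q (k *s a) d = k *s q a d" using q by (simp add: cbilin_prod_def)
lemma cp_scr: "q a (k *s d) = k *s q a d" using q by (simp add: cbilin_prod_def)
lemma cp_zerol: "q 0 d = 0" using cp_scl[of 0 0 d] by simp
lemma cp_zeror: "q a 0 = 0" using cp_scr[of a 0 0] by simp
lemma cp_neg_l: "q (- a) d = - q a d" using cp_scl[of "-1" a d] by (simp add: vec_eq_iff)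
lemma cp_neg_r: "q a (- d) = - q a d" using cp_scr[of a "-1" d] by (simp add: vec_eq_iff)
lemma cp_diffl: "q (a - b) d = q a d - q b d" using cp_addl[of a "-b" d] cp_neg_l by simp
lemma cp_diffr: "q a (b - d) = q a b - q a d" using cp_addr[of a b "-d"] cp_neg_r by simp
lemma cp_bb: "bounded_bilinear q"
  unfolding bilinear_conv_bounded_bilinear[symmetric] bilinear_def linear_iff
  by (simp add: scaleR_vecC cp_addl cp_addr cp_scl cp_scr)
end

lemma pair_cbilin: "cbilin_form pair"
  by (auto simp: cbilin_form_def pair_def sum.distrib sum_distrib_left algebra_simps)

lemma pair_comm: "pair u a = pair a u"
  by (simp add: pair_def mult.commute)

lemma pair_axis: "pair u (axis i 1) = u $ i"
proof -
  have "pair u (axis i 1) = (\<Sum>j\<in>UNIV. if j = i then u $ j else 0)"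
    unfolding pair_def by (intro sum.cong) (auto simp: axis_def)
  then show ?thesis by simp
qed

lemma vec_eq_pair: "(\<And>z. pair X z = pair Y z) \<Longrightarrow> X = Y"
  by (metis pair_axis vec_eq_iff)

lemma pair_chi_lin:
  assumes add: "\<And>x y. L (x + y) = L x + L y" and sc: "\<And>k x. L (k *s x) = k * L x"
  shows "pair (\<chi> i. L (axis i 1)) z = L z"
proof -
  have z0: "L 0 = 0" using sc[of 0 0] by simp
  have sumL: "L (sum F S) = (\<Sum>i\<in>S. L (F i))" for F and S :: "'b set"
    by (induction S rule: infinite_finite_induct) (auto simp: z0 add)
  have "L z = L (\<Sum>i\<in>UNIV. (z$i) *s axis i 1)" by (simp add: basis_expansion)
  also have "\<dots> = (\<Sum>i\<in>UNIV. z$i * L (axis i 1))" by (simp add: sumL sc)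
  finally show ?thesis by (simp add: pair_def mult.commute)
qed

lemma pair_chi: "cbilin_form q \<Longrightarrow> pair (\<chi> i. q a (axis i 1)) z = q a z"
  by (rule pair_chi_lin) (auto simp: cf_addr cf_scr)

lemma pair_tl: "cbilin_form q \<Longrightarrow> pair (tl q a) z = q a z"
  unfolding tl_def by (rule pair_chi)

lemma pair_Lst: "cbilin_prod m \<Longrightarrow> pair (Lst m a u) z = pair u (m a z)"
  unfolding Lst_def
  by (rule pair_chi_lin) (auto simp: cp_addr cp_scr cf_addr[OF pair_cbilin] cf_scr[OF pair_cbilin])

lemma pair_Rst: "cbilin_prod m \<Longrightarrow> pair (Rst m b u) z = pair u (m z b)"
  unfolding Rst_def
  by (rule pair_chi_lin) (auto simp: cp_addl cp_scl cf_addr[OF pair_cbilin] cf_scr[OF pair_cbilin])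

lemma pair_scl: "pair (k *s u) z = k * pair u z" by (rule cf_scl[OF pair_cbilin])
lemma pair_addl: "pair (u + u') z = pair u z + pair u' z" by (rule cf_addl[OF pair_cbilin])

lemma Lst_cbilin: assumes m: "cbilin_prod m" shows "cbilin_prod (Lst m)"
  unfolding cbilin_prod_def
  by (intro conjI allI vec_eq_pair)
    (simp_all add: pair_Lst[OF m] cp_addl[OF m] cp_scl[OF m] pair_addl pair_scl
      cf_addl[OF pair_cbilin] cf_addr[OF pair_cbilin] cf_scl[OF pair_cbilin] cf_scr[OF pair_cbilin])

lemma Rst_cbilin: assumes m: "cbilin_prod m" shows "cbilin_prod (Rst m)"
  unfolding cbilin_prod_def
  by (intro conjI allI vec_eq_pair)
    (simp_all add: pair_Rst[OF m] cp_addr[OF m] cp_scr[OF m] pair_addl pair_scl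
      cf_addl[OF pair_cbilin] cf_addr[OF pair_cbilin] cf_scl[OF pair_cbilin] cf_scr[OF pair_cbilin])

lemma tl_add: "cbilin_form q \<Longrightarrow> tl q (a + b) = tl q a + tl q b"
  by (intro vec_eq_pair) (simp add: pair_tl pair_addl cf_addl)
lemma tl_sc: "cbilin_form q \<Longrightarrow> tl q (k *s a) = k *s tl q a"
  by (intro vec_eq_pair) (simp add: pair_tl pair_scl cf_scl)
lemma tl_bl: "cbilin_form q \<Longrightarrow> bounded_linear (tl q)"
  unfolding linear_conv_bounded_linear[symmetric] linear_iff
  by (simp add: tl_add tl_sc scaleR_vecC)


section \<open>Smoothness\<close>

definition Dg :: "(real \<Rightarrow> 'a::real_normed_vector) \<Rightarrow> real \<Rightarrow> 'a" where
  "Dg f = (\<lambda>x. vector_derivative f (at x))"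

lemma D_Dg: "D = Dg" by (rule ext) (simp add: D_def Dg_def)

definition smg :: "(real \<Rightarrow> 'a::real_normed_vector) \<Rightarrow> bool" where
  "smg f \<longleftrightarrow> (\<forall>k x. (Dg ^^ k) f differentiable (at x))"

definition per :: "(real \<Rightarrow> 'a) \<Rightarrow> bool" where
  "per f \<longleftrightarrow> (\<forall>x. f (x + 1) = f x)"

fun smk :: "nat \<Rightarrow> (real \<Rightarrow> 'a::real_normed_vector) \<Rightarrow> bool" where
  "smk 0 f = (\<forall>x. f differentiable (at x))"
| "smk (Suc k) f = ((\<forall>x. f differentiable (at x)) \<and> smk k (Dg f))"

lemma smk_iff: "smk k f \<longleftrightarrow> (\<forall>j\<le>k. \<forall>x. (Dg ^^ j) f differentiable (at x))"
proof (induction k arbitrary: f)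
  case 0 then show ?case by simp
next
  case (Suc k)
  show ?case
  proof
    assume "smk (Suc k) f"
    then have a: "\<forall>x. f differentiable (at x)" and b: "\<forall>j\<le>k. \<forall>x. (Dg ^^ j) (Dg f) differentiable (at x)"
      using Suc by auto
    show "\<forall>j\<le>Suc k. \<forall>x. (Dg ^^ j) f differentiable (at x)"
    proof (intro allI impI)
      fix j x assume "j \<le> Suc k"
      then show "(Dg ^^ j) f differentiable (at x)"
        using a b by (cases j) (auto simp: funpow_Suc_right simp del: funpow.simps)
    qed
  next
    assume h: "\<forall>j\<le>Suc k. \<forall>x. (Dg ^^ j) f differentiable (at x)"
    have "\<forall>j\<le>k. \<forall>x. (Dg ^^ j) (Dg f) differentiable (at x)"
    proof (intro allI impI)
      fix j x assume "j \<le> k"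
      then show "(Dg ^^ j) (Dg f) differentiable (at x)"
        using h[rule_format, of "Suc j" x] by (simp add: funpow_Suc_right del: funpow.simps)
    qed
    then show "smk (Suc k) f" using h[rule_format, of 0] Suc by auto
  qed
qed

lemma smg_smk: "smg f \<longleftrightarrow> (\<forall>k. smk k f)"
  unfolding smg_def smk_iff by blast

lemma smg_diff: "smg f \<Longrightarrow> f differentiable (at x)"
  unfolding smg_def by (metis funpow_0)

lemma smg_Dg [simp]: "smg f \<Longrightarrow> smg (Dg f)"
  unfolding smg_def by (metis funpow_Suc_right o_apply)

lemma smg_deriv: "smg f \<Longrightarrow> (f has_vector_derivative Dg f x) (at x)"
  unfolding Dg_def by (metis smg_diff vector_derivative_works)

lemma smg_cont: "smg f \<Longrightarrow> continuous_on S f"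
  by (meson differentiable_at_imp_differentiable_on differentiable_imp_continuous_on smg_diff)

lemma smgI: "(\<And>k. smk k f) \<Longrightarrow> smg f" by (simp add: smg_smk)

lemma Dg_add: "(\<And>x. f differentiable (at x)) \<Longrightarrow> (\<And>x. g differentiable (at x)) \<Longrightarrow>
   Dg (\<lambda>x. f x + g x) = (\<lambda>x. Dg f x + Dg g x)"
  unfolding Dg_def
  by (rule ext, rule vector_derivative_at, intro has_vector_derivative_add)
     (auto simp: vector_derivative_works[symmetric])

lemma Dg_bil: assumes B: "bounded_bilinear B" and df: "\<And>x. f differentiable (at x)"
  and dg: "\<And>x. g differentiable (at x)"
  shows "Dg (\<lambda>x. B (f x) (g x)) = (\<lambda>x. B (Dg f x) (g x) + B (f x) (Dg g x))"
proof
  fix x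
  have f': "(f has_vector_derivative vector_derivative f (at x)) (at x)"
    using df vector_derivative_works by blast
  have g': "(g has_vector_derivative vector_derivative g (at x)) (at x)"
    using dg vector_derivative_works by blast
  show "Dg (\<lambda>x. B (f x) (g x)) x = B (Dg f x) (g x) + B (f x) (Dg g x)"
    unfolding Dg_def
    by (rule vector_derivative_at, rule has_vector_derivative_eq_rhs,
        rule bounded_bilinear.has_vector_derivative[OF B f' g']) simp
qed

lemma bil_differentiable: "bounded_bilinear B \<Longrightarrow> smg f \<Longrightarrow> smg g \<Longrightarrow> (\<lambda>x. B (f x) (g x)) differentiable (at x)"
  by (rule differentiableI_vector, rule bounded_bilinear.has_vector_derivative[OF _ smg_deriv smg_deriv])

lemma lin_differentiable: "bounded_linear L \<Longrightarrow> smg f \<Longrightarrow> (\<lambda>x. L (f x)) differentiable (at x)"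
  by (rule differentiableI_vector, rule bounded_linear.has_vector_derivative[OF _ smg_deriv])

lemma Dg_lin: "bounded_linear L \<Longrightarrow> (\<And>x. f differentiable (at x)) \<Longrightarrow>
   Dg (\<lambda>x. L (f x)) = (\<lambda>x. L (Dg f x))"
  unfolding Dg_def
  by (rule ext, rule vector_derivative_at, rule bounded_linear.has_vector_derivative)
     (auto simp: vector_derivative_works[symmetric])

lemma Dg_const [simp]: "Dg (\<lambda>x. c) = (\<lambda>x. 0)"
  unfolding Dg_def by (rule ext, rule vector_derivative_at) simp

lemma smk_add: "smk k f \<Longrightarrow> smk k g \<Longrightarrow> smk k (\<lambda>x. f x + g x)"
proof (induction k arbitrary: f g)
  case 0 then show ?case by auto
next
  case (Suc k)
  then show ?case by (auto simp: Dg_add)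
qed

lemma smg_add [simp]: "smg f \<Longrightarrow> smg g \<Longrightarrow> smg (\<lambda>x. f x + g x)"
  by (simp add: smg_smk smk_add)

lemma smk_bil: "bounded_bilinear B \<Longrightarrow> smg f \<Longrightarrow> smg g \<Longrightarrow> smk k (\<lambda>x. B (f x) (g x))"
proof (induction k arbitrary: f g)
  case 0 then show ?case
    using bil_differentiable[OF 0(1-3)] by simp
next
  case (Suc k)
  have "smk k (Dg (\<lambda>x. B (f x) (g x)))"
    using Suc by (simp add: Dg_bil smg_diff smk_add)
  then show ?case using Suc.prems
    using bil_differentiable[OF Suc.prems] by simp
qed

lemma smg_bil: assumes "bounded_bilinear B" "smg f" "smg g" shows "smg (\<lambda>x. B (f x) (g x))"
  by (rule smgI) (rule smk_bil[OF assms])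

lemma smk_lin: "bounded_linear L \<Longrightarrow> smg f \<Longrightarrow> smk k (\<lambda>x. L (f x))"
proof (induction k arbitrary: f)
  case 0 then show ?case
    using lin_differentiable[OF 0(1-2)] by simp
next
  case (Suc k)
  then show ?case
    using lin_differentiable[OF Suc.prems] by (simp add: smg_diff Dg_lin)
qed

lemma smg_lin: assumes "bounded_linear L" "smg f" shows "smg (\<lambda>x. L (f x))"
  by (rule smgI) (rule smk_lin[OF assms])

lemma Dg_pow_const: "(Dg ^^ k) (\<lambda>x. c) = (\<lambda>x. if k = 0 then c else 0)"
  by (induction k) auto

lemma smg_const [simp]: "smg (\<lambda>x. c)"
  unfolding smg_def Dg_pow_const by auto

lemma per_Dg: assumes p: "per f" and d: "\<And>x. f differentiable (at x)" shows "per (Dg f)"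
  unfolding per_def
proof
  fix x
  have f: "(f has_vector_derivative Dg f x) (at x)"
    unfolding Dg_def using d vector_derivative_works by blast
  have s: "((\<lambda>y. y - 1) has_vector_derivative 1) (at (x + 1))"
    by (auto intro!: derivative_eq_intros)
  have "((f \<circ> (\<lambda>y. y - 1)) has_vector_derivative (1 *\<^sub>R Dg f x)) (at (x + 1))"
    by (rule vector_diff_chain_at[OF s]) (simp add: f)
  moreover have "f \<circ> (\<lambda>y. y - 1) = f"
    using p unfolding per_def by (auto simp: fun_eq_iff) (metis diff_add_cancel)
  ultimately show "Dg f (x + 1) = Dg f x"
    unfolding Dg_def by (simp add: vector_derivative_at)
qed

lemma loops_iff: "f \<in> loops \<longleftrightarrow> per f \<and> smg f"
  by (simp add: loops_def per_def smg_def D_Dg)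

lemma integral_Dg_per:
  fixes h :: "real \<Rightarrow> 'a::banach"
  assumes "per h" "smg h" shows "integral {0..1} (Dg h) = 0"
proof -
  have "(Dg h has_integral (h 1 - h 0)) {0..1}"
    by (rule fundamental_theorem_of_calculus)
       (auto intro: has_vector_derivative_at_within smg_deriv[OF assms(2)])
  moreover have "h 1 = h 0" using assms(1) unfolding per_def by (metis add_0)
  ultimately show ?thesis by (simp add: integral_unique)
qed


lemma smg_minus [simp]: assumes "smg f" shows "smg (\<lambda>x. - f x)"
  using smg_lin[OF bounded_linear_minus[OF bounded_linear_ident] assms] by simp

lemma smg_diffs [simp]: "smg f \<Longrightarrow> smg g \<Longrightarrow> smg (\<lambda>x. f x - g x)"
  using smg_add[of f "\<lambda>x. - g x"] by simp

lemma Dg_minus: assumes "\<And>x. f differentiable (at x)" shows "Dg (\<lambda>x. - f x) = (\<lambda>x. - Dg f x)"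
  using Dg_lin[OF bounded_linear_minus[OF bounded_linear_ident] assms] by simp

section \<open>Integrals\<close>

lemma int_eq_D:
  fixes A B \<Phi> :: "real \<Rightarrow> 'a::euclidean_space"
  assumes "\<And>x. A x = B x + Dg \<Phi> x" "continuous_on {0..1} B" "per \<Phi>" "smg \<Phi>"
  shows "integral {0..1} A = integral {0..1} B"
proof -
  have "integral {0..1} A = integral {0..1} B + integral {0..1} (Dg \<Phi>)"
    unfolding assms(1)[abs_def]
    by (rule integral_add) (auto intro!: integrable_continuous_interval assms smg_cont smg_Dg)
  then show ?thesis using integral_Dg_per[OF assms(3,4)] by simp
qed

definition cub :: "(complex \<Rightarrow> real \<Rightarrow> complex) \<Rightarrow> (real \<Rightarrow> complex) \<Rightarrow> bool" where
  "cub P A \<longleftrightarrow> (\<exists>A0 A2 A3. (\<forall>e x. P e x = A0 x + e * A x + e^2 * A2 x + e^3 * A3 x) \<and>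
     continuous_on {0..1} A0 \<and> continuous_on {0..1} A \<and> continuous_on {0..1} A2 \<and> continuous_on {0..1} A3)"

lemma cub_deriv: assumes "cub P A"
  shows "((\<lambda>e. integral {0..1} (P e)) has_field_derivative integral {0..1} A) (at 0)"
proof -
  obtain A0 A2 A3 where P: "\<And>e x. P e x = A0 x + e * A x + e^2 * A2 x + e^3 * A3 x"
    and c: "continuous_on {0..1} A0" "continuous_on {0..1} A" "continuous_on {0..1} A2" "continuous_on {0..1} A3"
    using assms unfolding cub_def by blast
  have i: "A0 integrable_on {0..1}" "A integrable_on {0..1}" "A2 integrable_on {0..1}" "A3 integrable_on {0..1}"
    using c by (auto intro: integrable_continuous_interval)
  have eq: "integral {0..1} (P e) = integral {0..1} A0 + e * integral {0..1} A
      + e^2 * integral {0..1} A2 + e^3 * integral {0..1} A3" for e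
  proof -
    have "integral {0..1} (P e) = integral {0..1} (\<lambda>x. A0 x + e * A x + e^2 * A2 x + e^3 * A3 x)"
      by (simp add: P[abs_def])
    also have "\<dots> = integral {0..1} (\<lambda>x. A0 x + e * A x + e^2 * A2 x) + integral {0..1} (\<lambda>x. e^3 * A3 x)"
      by (rule integral_add) (auto intro!: i integrable_add integrable_on_mult_right)
    also have "integral {0..1} (\<lambda>x. A0 x + e * A x + e^2 * A2 x) = integral {0..1} (\<lambda>x. A0 x + e * A x) + integral {0..1} (\<lambda>x. e^2 * A2 x)"
      by (rule integral_add) (auto intro!: i integrable_add integrable_on_mult_right)
    also have "integral {0..1} (\<lambda>x. A0 x + e * A x) = integral {0..1} A0 + integral {0..1} (\<lambda>x. e * A x)"
      by (rule integral_add) (auto intro!: i integrable_on_mult_right)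
    finally show ?thesis by simp
  qed
  show ?thesis unfolding eq
    by (rule derivative_eq_intros refl | simp)+
qed

lemma cub_add: assumes "cub P A" "cub Q B" shows "cub (\<lambda>e x. P e x + Q e x) (\<lambda>x. A x + B x)"
proof -
  obtain A0 A2 A3 where a: "\<forall>e x. P e x = A0 x + e * A x + e^2 * A2 x + e^3 * A3 x"
    "continuous_on {0..1} A0" "continuous_on {0..1} A" "continuous_on {0..1} A2" "continuous_on {0..1} A3"
    using assms(1) unfolding cub_def by blast
  obtain B0 B2 B3 where b: "\<forall>e x. Q e x = B0 x + e * B x + e^2 * B2 x + e^3 * B3 x"
    "continuous_on {0..1} B0" "continuous_on {0..1} B" "continuous_on {0..1} B2" "continuous_on {0..1} B3"
    using assms(2) unfolding cub_def by blast
  show ?thesis unfolding cub_def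
    by (rule exI[of _ "\<lambda>x. A0 x + B0 x"], rule exI[of _ "\<lambda>x. A2 x + B2 x"], rule exI[of _ "\<lambda>x. A3 x + B3 x"])
       (use a b in \<open>auto intro!: continuous_intros simp: algebra_simps\<close>)
qed

lemma cub_cmul: assumes "cub P A" shows "cub (\<lambda>e x. k * P e x) (\<lambda>x. k * A x)"
proof -
  obtain A0 A2 A3 where a: "\<forall>e x. P e x = A0 x + e * A x + e^2 * A2 x + e^3 * A3 x"
    "continuous_on {0..1} A0" "continuous_on {0..1} A" "continuous_on {0..1} A2" "continuous_on {0..1} A3"
    using assms(1) unfolding cub_def by blast
  show ?thesis unfolding cub_def
    by (rule exI[of _ "\<lambda>x. k * A0 x"], rule exI[of _ "\<lambda>x. k * A2 x"], rule exI[of _ "\<lambda>x. k * A3 x"])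
       (use a in \<open>auto intro!: continuous_intros simp: algebra_simps\<close>)
qed

lemma cub_tri:
  fixes T :: "'n::finite vecC \<Rightarrow> 'n vecC \<Rightarrow> 'n vecC \<Rightarrow> complex"
  assumes T1: "\<And>a a' b d. T (a + a') b d = T a b d + T a' b d" "\<And>k a b d. T (k *s a) b d = k * T a b d"
    and T2: "\<And>a b b' d. T a (b + b') d = T a b d + T a b' d" "\<And>k a b d. T a (k *s b) d = k * T a b d"
    and T3: "\<And>a b d d'. T a b (d + d') = T a b d + T a b d'" "\<And>k a b d. T a b (k *s d) = k * T a b d"
    and P: "\<And>e x. P e x = T (A x + e *s A' x) (B x + e *s B' x) (C x + e *s C' x)"
    and A1: "\<And>x. A1 x = T (A' x) (B x) (C x) + T (A x) (B' x) (C x) + T (A x) (B x) (C' x)"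
    and c: "continuous_on {0..1} (\<lambda>x. T (A x) (B x) (C x))"
      "continuous_on {0..1} (\<lambda>x. T (A' x) (B x) (C x))"
      "continuous_on {0..1} (\<lambda>x. T (A x) (B' x) (C x))"
      "continuous_on {0..1} (\<lambda>x. T (A x) (B x) (C' x))"
      "continuous_on {0..1} (\<lambda>x. T (A' x) (B' x) (C x))"
      "continuous_on {0..1} (\<lambda>x. T (A' x) (B x) (C' x))"
      "continuous_on {0..1} (\<lambda>x. T (A x) (B' x) (C' x))"
      "continuous_on {0..1} (\<lambda>x. T (A' x) (B' x) (C' x))"
  shows "cub P A1"
  unfolding cub_def
proof (intro exI conjI)
  show "\<forall>e x. P e x = T (A x) (B x) (C x) + e * A1 x
      + e^2 * (T (A' x) (B' x) (C x) + T (A' x) (B x) (C' x) + T (A x) (B' x) (C' x))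
      + e^3 * T (A' x) (B' x) (C' x)"
    by (simp add: P A1 T1 T2 T3 algebra_simps power2_eq_square power3_eq_cube)
  show "continuous_on {0..1} A1" unfolding A1[abs_def] using c by (intro continuous_intros)
qed (use c in \<open>auto intro!: continuous_intros\<close>)

lemma cub_bi:
  fixes T :: "'n::finite vecC \<Rightarrow> 'n vecC \<Rightarrow> complex"
  assumes T1: "\<And>a a' b. T (a + a') b = T a b + T a' b" "\<And>k a b. T (k *s a) b = k * T a b"
    and T2: "\<And>a b b'. T a (b + b') = T a b + T a b'" "\<And>k a b. T a (k *s b) = k * T a b"
    and P: "\<And>e x. P e x = T (A x + e *s A' x) (B x + e *s B' x)"
    and A1: "\<And>x. A1 x = T (A' x) (B x) + T (A x) (B' x)"
    and c: "continuous_on {0..1} (\<lambda>x. T (A x) (B x))"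
      "continuous_on {0..1} (\<lambda>x. T (A' x) (B x))"
      "continuous_on {0..1} (\<lambda>x. T (A x) (B' x))"
      "continuous_on {0..1} (\<lambda>x. T (A' x) (B' x))"
  shows "cub P A1"
  unfolding cub_def
proof (intro exI conjI)
  show "\<forall>e x. P e x = T (A x) (B x) + e * A1 x + e^2 * T (A' x) (B' x) + e^3 * 0"
    by (simp add: P A1 T1 T2 algebra_simps power2_eq_square)
  show "continuous_on {0..1} A1" unfolding A1[abs_def] using c by (intro continuous_intros)
qed (use c in \<open>auto intro!: continuous_intros\<close>)


lemma smult_bl: "bounded_linear (\<lambda>y::'n::finite vecC. k *s y)"
  unfolding linear_conv_bounded_linear[symmetric] linear_iff
  by (simp add: scaleR_vecC vec_eq_iff algebra_simps)

lemma smg_smult [simp]: "smg f \<Longrightarrow> smg (\<lambda>x. k *s (f x::'n::finite vecC))"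
  by (rule smg_lin[OF smult_bl])
lemma Dg_smult [simp]: "smg f \<Longrightarrow> Dg (\<lambda>x. k *s (f x::'n::finite vecC)) = (\<lambda>x. k *s Dg f x)"
  by (rule Dg_lin[OF smult_bl], simp add: smg_diff)
lemma smg_cmult [simp]: "smg f \<Longrightarrow> smg (\<lambda>x. k * (f x::complex))"
  by (rule smg_lin[OF bounded_linear_mult_right])
lemma Dg_cmult [simp]: "smg f \<Longrightarrow> Dg (\<lambda>x. k * (f x::complex)) = (\<lambda>x. k * Dg f x)"
  by (rule Dg_lin[OF bounded_linear_mult_right], simp add: smg_diff)
lemma smg_cdiv [simp]: "smg f \<Longrightarrow> smg (\<lambda>x. (f x::complex) / k)"
  by (rule smg_lin[OF bounded_linear_divide])
lemma Dg_cdiv [simp]: "smg f \<Longrightarrow> Dg (\<lambda>x. (f x::complex) / k) = (\<lambda>x. Dg f x / k)"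
  by (rule Dg_lin[OF bounded_linear_divide], simp add: smg_diff)
lemma Dg_add' [simp]: "smg f \<Longrightarrow> smg g \<Longrightarrow> Dg (\<lambda>x. f x + g x) = (\<lambda>x. Dg f x + Dg g x)"
  by (rule Dg_add) (simp_all add: smg_diff)
lemma Dg_diff' [simp]: "smg f \<Longrightarrow> smg g \<Longrightarrow> Dg (\<lambda>x. f x - g x) = (\<lambda>x. Dg f x - Dg g x)"
  using Dg_add[of f "\<lambda>x. - g x"] Dg_minus[of g] by (simp add: smg_diff)

lemma smg_cf [simp]: "cbilin_form q \<Longrightarrow> smg f \<Longrightarrow> smg g \<Longrightarrow> smg (\<lambda>x. q (f x) (g x))"
  by (rule smg_bil[OF cf_bb])
lemma Dg_cf [simp]: "cbilin_form q \<Longrightarrow> smg f \<Longrightarrow> smg g \<Longrightarrow>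
   Dg (\<lambda>x. q (f x) (g x)) = (\<lambda>x. q (Dg f x) (g x) + q (f x) (Dg g x))"
  by (rule Dg_bil[OF cf_bb]) (simp_all add: smg_diff)
lemma smg_cp [simp]: "cbilin_prod q \<Longrightarrow> smg f \<Longrightarrow> smg g \<Longrightarrow> smg (\<lambda>x. q (f x) (g x))"
  by (rule smg_bil[OF cp_bb])
lemma Dg_cp [simp]: "cbilin_prod q \<Longrightarrow> smg f \<Longrightarrow> smg g \<Longrightarrow>
   Dg (\<lambda>x. q (f x) (g x)) = (\<lambda>x. q (Dg f x) (g x) + q (f x) (Dg g x))"
  by (rule Dg_bil[OF cp_bb]) (simp_all add: smg_diff)
lemma smg_tl [simp]: "cbilin_form q \<Longrightarrow> smg f \<Longrightarrow> smg (\<lambda>x. tl q (f x))"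
  by (rule smg_lin[OF tl_bl])
lemma Dg_tl [simp]: "cbilin_form q \<Longrightarrow> smg f \<Longrightarrow> Dg (\<lambda>x. tl q (f x)) = (\<lambda>x. tl q (Dg f x))"
  by (rule Dg_lin[OF tl_bl]) (simp_all add: smg_diff)

locale NS =
  fixes m :: "complex ^ 'n::finite \<Rightarrow> complex ^ 'n \<Rightarrow> complex ^ 'n"
    and g0 g1 f0 f1 h0 h1 :: "complex ^ 'n \<Rightarrow> complex ^ 'n \<Rightarrow> complex"
  assumes nov: "novikov m"
    and g_bil: "cbilin_form g0" "cbilin_form g1"
    and g_sym: "\<And>a b. g0 a b = g0 b a" "\<And>a b. g1 a b = g1 b a"
    and g_inv: "\<And>a b d. g0 (m a b) d = g0 a (m d b)" "\<And>a b d. g1 (m a b) d = g1 a (m d b)"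
    and f_bil: "cbilin_form f0" "cbilin_form f1"
    and f_skew: "\<And>a b. f0 a b = - f0 b a" "\<And>a b. f1 a b = - f1 b a"
    and f_inv: "\<And>a b d. f0 (m a b) d = f0 a (m d b)" "\<And>a b d. f1 (m a b) d = f1 a (m d b)"
    and f_cyc: "\<And>a b d. f0 (m a b) d + f0 (m b d) a + f0 (m d a) b = 0"
               "\<And>a b d. f1 (m a b) d + f1 (m b d) a + f1 (m d a) b = 0"
    and h_bil: "cbilin_form h0" "cbilin_form h1"
    and h_sym: "\<And>a b. h0 a b = h0 b a" "\<And>a b. h1 a b = h1 b a"
    and h0_tot: "\<And>a b d. h0 (m a b) d = h0 (m a d) b \<and> h0 (m a b) d = h0 (m b a) d
                    \<and> h0 (m a b) d = h0 (m b d) a \<and> h0 (m a b) d = h0 (m d a) b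
                    \<and> h0 (m a b) d = h0 (m d b) a"
    and h1_tot: "\<And>a b d. h1 (m a b) d = h1 (m a d) b \<and> h1 (m a b) d = h1 (m b a) d
                    \<and> h1 (m a b) d = h1 (m b d) a \<and> h1 (m a b) d = h1 (m d a) b
                    \<and> h1 (m a b) d = h1 (m d b) a"
    and Lam_bij: "bij_betw (Lam g0 f0 h0) loops loops"
begin

lemma m_cp: "cbilin_prod m" using nov by (simp add: novikov_def)
lemma RC: "m (m a b) d = m (m a d) b" using nov by (simp add: novikov_def)
lemma LS: "m a (m b d) = m (m a b) d - m (m b a) d + m b (m a d)"
proof -
  have h: "m (m a b) d - m a (m b d) = m (m b a) d - m b (m a d)" using nov by (simp add: novikov_def)
  have "m a (m b d) = m (m a b) d - (m (m a b) d - m a (m b d))" by simp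
  also have "\<dots> = m (m a b) d - (m (m b a) d - m b (m a d))" by (simp only: h)
  finally show ?thesis by (simp add: algebra_simps)
qed

lemmas cfs = g_bil f_bil h_bil pair_cbilin
lemmas cps = m_cp Lst_cbilin[OF m_cp] Rst_cbilin[OF m_cp]

lemmas lin_simps [simp] =
  cf_addl[OF g_bil(1)] cf_addr[OF g_bil(1)] cf_scl[OF g_bil(1)] cf_scr[OF g_bil(1)] cf_zerol[OF g_bil(1)] cf_zeror[OF g_bil(1)] cf_diffl[OF g_bil(1)] cf_diffr[OF g_bil(1)]
  cf_addl[OF g_bil(2)] cf_addr[OF g_bil(2)] cf_scl[OF g_bil(2)] cf_scr[OF g_bil(2)] cf_zerol[OF g_bil(2)] cf_zeror[OF g_bil(2)] cf_diffl[OF g_bil(2)] cf_diffr[OF g_bil(2)]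
  cf_addl[OF f_bil(1)] cf_addr[OF f_bil(1)] cf_scl[OF f_bil(1)] cf_scr[OF f_bil(1)] cf_zerol[OF f_bil(1)] cf_zeror[OF f_bil(1)] cf_diffl[OF f_bil(1)] cf_diffr[OF f_bil(1)]
  cf_addl[OF f_bil(2)] cf_addr[OF f_bil(2)] cf_scl[OF f_bil(2)] cf_scr[OF f_bil(2)] cf_zerol[OF f_bil(2)] cf_zeror[OF f_bil(2)] cf_diffl[OF f_bil(2)] cf_diffr[OF f_bil(2)]
  cf_addl[OF h_bil(1)] cf_addr[OF h_bil(1)] cf_scl[OF h_bil(1)] cf_scr[OF h_bil(1)] cf_zerol[OF h_bil(1)] cf_zeror[OF h_bil(1)] cf_diffl[OF h_bil(1)] cf_diffr[OF h_bil(1)]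
  cf_addl[OF h_bil(2)] cf_addr[OF h_bil(2)] cf_scl[OF h_bil(2)] cf_scr[OF h_bil(2)] cf_zerol[OF h_bil(2)] cf_zeror[OF h_bil(2)] cf_diffl[OF h_bil(2)] cf_diffr[OF h_bil(2)]
  cf_addl[OF pair_cbilin] cf_addr[OF pair_cbilin] cf_scl[OF pair_cbilin] cf_scr[OF pair_cbilin] cf_zerol[OF pair_cbilin] cf_zeror[OF pair_cbilin] cf_diffl[OF pair_cbilin] cf_diffr[OF pair_cbilin]
  cp_addl[OF m_cp] cp_addr[OF m_cp] cp_scl[OF m_cp] cp_scr[OF m_cp] cp_zerol[OF m_cp] cp_zeror[OF m_cp] cp_diffl[OF m_cp] cp_diffr[OF m_cp]
  cp_addl[OF cps(2)] cp_addr[OF cps(2)] cp_scl[OF cps(2)] cp_scr[OF cps(2)] cp_zerol[OF cps(2)] cp_zeror[OF cps(2)] cp_diffl[OF cps(2)] cp_diffr[OF cps(2)]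
  cp_addl[OF cps(3)] cp_addr[OF cps(3)] cp_scl[OF cps(3)] cp_scr[OF cps(3)] cp_zerol[OF cps(3)] cp_zeror[OF cps(3)] cp_diffl[OF cps(3)] cp_diffr[OF cps(3)]
  tl_add[OF g_bil(1)] tl_add[OF g_bil(2)] tl_add[OF f_bil(1)] tl_add[OF f_bil(2)] tl_add[OF h_bil(1)] tl_add[OF h_bil(2)]
  tl_sc[OF g_bil(1)] tl_sc[OF g_bil(2)] tl_sc[OF f_bil(1)] tl_sc[OF f_bil(2)] tl_sc[OF h_bil(1)] tl_sc[OF h_bil(2)]
  pair_tl[OF g_bil(1)] pair_tl[OF g_bil(2)] pair_tl[OF f_bil(1)] pair_tl[OF f_bil(2)] pair_tl[OF h_bil(1)] pair_tl[OF h_bil(2)]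
  pair_Lst[OF m_cp] pair_Rst[OF m_cp]

lemmas cf_cp_facts [simp] = cfs cps

lemma smg_g0 [simp]: "smg f \<Longrightarrow> smg g \<Longrightarrow> smg (\<lambda>x. g0 (f x) (g x))"
  by (rule smg_cf[OF g_bil(1)])
lemma Dg_g0 [simp]: "smg f \<Longrightarrow> smg g \<Longrightarrow> Dg (\<lambda>x. g0 (f x) (g x)) = (\<lambda>x. g0 (Dg f x) (g x) + g0 (f x) (Dg g x))"
  by (rule Dg_cf[OF g_bil(1)])
lemma smg_tl_g0 [simp]: "smg f \<Longrightarrow> smg (\<lambda>x. tl g0 (f x))"
  by (rule smg_tl[OF g_bil(1)])
lemma Dg_tl_g0 [simp]: "smg f \<Longrightarrow> Dg (\<lambda>x. tl g0 (f x)) = (\<lambda>x. tl g0 (Dg f x))"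
  by (rule Dg_tl[OF g_bil(1)])
lemma smg_g1 [simp]: "smg f \<Longrightarrow> smg g \<Longrightarrow> smg (\<lambda>x. g1 (f x) (g x))"
  by (rule smg_cf[OF g_bil(2)])
lemma Dg_g1 [simp]: "smg f \<Longrightarrow> smg g \<Longrightarrow> Dg (\<lambda>x. g1 (f x) (g x)) = (\<lambda>x. g1 (Dg f x) (g x) + g1 (f x) (Dg g x))"
  by (rule Dg_cf[OF g_bil(2)])
lemma smg_tl_g1 [simp]: "smg f \<Longrightarrow> smg (\<lambda>x. tl g1 (f x))"
  by (rule smg_tl[OF g_bil(2)])
lemma Dg_tl_g1 [simp]: "smg f \<Longrightarrow> Dg (\<lambda>x. tl g1 (f x)) = (\<lambda>x. tl g1 (Dg f x))"
  by (rule Dg_tl[OF g_bil(2)])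
lemma smg_f0 [simp]: "smg f \<Longrightarrow> smg g \<Longrightarrow> smg (\<lambda>x. f0 (f x) (g x))"
  by (rule smg_cf[OF f_bil(1)])
lemma Dg_f0 [simp]: "smg f \<Longrightarrow> smg g \<Longrightarrow> Dg (\<lambda>x. f0 (f x) (g x)) = (\<lambda>x. f0 (Dg f x) (g x) + f0 (f x) (Dg g x))"
  by (rule Dg_cf[OF f_bil(1)])
lemma smg_tl_f0 [simp]: "smg f \<Longrightarrow> smg (\<lambda>x. tl f0 (f x))"
  by (rule smg_tl[OF f_bil(1)])
lemma Dg_tl_f0 [simp]: "smg f \<Longrightarrow> Dg (\<lambda>x. tl f0 (f x)) = (\<lambda>x. tl f0 (Dg f x))"
  by (rule Dg_tl[OF f_bil(1)])
lemma smg_f1 [simp]: "smg f \<Longrightarrow> smg g \<Longrightarrow> smg (\<lambda>x. f1 (f x) (g x))"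
  by (rule smg_cf[OF f_bil(2)])
lemma Dg_f1 [simp]: "smg f \<Longrightarrow> smg g \<Longrightarrow> Dg (\<lambda>x. f1 (f x) (g x)) = (\<lambda>x. f1 (Dg f x) (g x) + f1 (f x) (Dg g x))"
  by (rule Dg_cf[OF f_bil(2)])
lemma smg_tl_f1 [simp]: "smg f \<Longrightarrow> smg (\<lambda>x. tl f1 (f x))"
  by (rule smg_tl[OF f_bil(2)])
lemma Dg_tl_f1 [simp]: "smg f \<Longrightarrow> Dg (\<lambda>x. tl f1 (f x)) = (\<lambda>x. tl f1 (Dg f x))"
  by (rule Dg_tl[OF f_bil(2)])
lemma smg_h0 [simp]: "smg f \<Longrightarrow> smg g \<Longrightarrow> smg (\<lambda>x. h0 (f x) (g x))"
  by (rule smg_cf[OF h_bil(1)])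
lemma Dg_h0 [simp]: "smg f \<Longrightarrow> smg g \<Longrightarrow> Dg (\<lambda>x. h0 (f x) (g x)) = (\<lambda>x. h0 (Dg f x) (g x) + h0 (f x) (Dg g x))"
  by (rule Dg_cf[OF h_bil(1)])
lemma smg_tl_h0 [simp]: "smg f \<Longrightarrow> smg (\<lambda>x. tl h0 (f x))"
  by (rule smg_tl[OF h_bil(1)])
lemma Dg_tl_h0 [simp]: "smg f \<Longrightarrow> Dg (\<lambda>x. tl h0 (f x)) = (\<lambda>x. tl h0 (Dg f x))"
  by (rule Dg_tl[OF h_bil(1)])
lemma smg_h1 [simp]: "smg f \<Longrightarrow> smg g \<Longrightarrow> smg (\<lambda>x. h1 (f x) (g x))"
  by (rule smg_cf[OF h_bil(2)])
lemma Dg_h1 [simp]: "smg f \<Longrightarrow> smg g \<Longrightarrow> Dg (\<lambda>x. h1 (f x) (g x)) = (\<lambda>x. h1 (Dg f x) (g x) + h1 (f x) (Dg g x))"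
  by (rule Dg_cf[OF h_bil(2)])
lemma smg_tl_h1 [simp]: "smg f \<Longrightarrow> smg (\<lambda>x. tl h1 (f x))"
  by (rule smg_tl[OF h_bil(2)])
lemma Dg_tl_h1 [simp]: "smg f \<Longrightarrow> Dg (\<lambda>x. tl h1 (f x)) = (\<lambda>x. tl h1 (Dg f x))"
  by (rule Dg_tl[OF h_bil(2)])
lemma smg_pair [simp]: "smg f \<Longrightarrow> smg g \<Longrightarrow> smg (\<lambda>x. pair (f x) (g x))"
  by (rule smg_cf[OF pair_cbilin])
lemma Dg_pair [simp]: "smg f \<Longrightarrow> smg g \<Longrightarrow> Dg (\<lambda>x. pair (f x) (g x)) = (\<lambda>x. pair (Dg f x) (g x) + pair (f x) (Dg g x))"
  by (rule Dg_cf[OF pair_cbilin])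
lemma smg_m [simp]: "smg f \<Longrightarrow> smg g \<Longrightarrow> smg (\<lambda>x. m (f x) (g x))"
  by (rule smg_cp[OF m_cp])
lemma Dg_m [simp]: "smg f \<Longrightarrow> smg g \<Longrightarrow> Dg (\<lambda>x. m (f x) (g x)) = (\<lambda>x. m (Dg f x) (g x) + m (f x) (Dg g x))"
  by (rule Dg_cp[OF m_cp])
lemma smg_Lstm [simp]: "smg f \<Longrightarrow> smg g \<Longrightarrow> smg (\<lambda>x. (Lst m) (f x) (g x))"
  by (rule smg_cp[OF cps(2)])
lemma Dg_Lstm [simp]: "smg f \<Longrightarrow> smg g \<Longrightarrow> Dg (\<lambda>x. (Lst m) (f x) (g x)) = (\<lambda>x. (Lst m) (Dg f x) (g x) + (Lst m) (f x) (Dg g x))"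
  by (rule Dg_cp[OF cps(2)])
lemma smg_Rstm [simp]: "smg f \<Longrightarrow> smg g \<Longrightarrow> smg (\<lambda>x. (Rst m) (f x) (g x))"
  by (rule smg_cp[OF cps(3)])
lemma Dg_Rstm [simp]: "smg f \<Longrightarrow> smg g \<Longrightarrow> Dg (\<lambda>x. (Rst m) (f x) (g x)) = (\<lambda>x. (Rst m) (Dg f x) (g x) + (Rst m) (f x) (Dg g x))"
  by (rule Dg_cp[OF cps(3)])

lemma gL: "g0 a (m b y) = g0 b (m a y)" using g_inv(1)[of b y a] g_sym(1)[of a] g_sym(1)[of "m a y"] by simp
lemma g1L: "g1 a (m b y) = g1 b (m a y)" using g_inv(2)[of b y a] g_sym(2)[of a] by simp
lemma fL: "f0 a (m b y) = - f0 b (m a y)" using f_inv(1)[of b y a] f_skew(1)[of a "m b y"] by simp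
lemma f1L: "f1 a (m b y) = - f1 b (m a y)" using f_inv(2)[of b y a] f_skew(2)[of a "m b y"] by simp
lemma hL: "h0 a (m b y) = h0 b (m a y)"
proof -
  have "h0 a (m b y) = h0 (m b y) a" by (rule h_sym(1))
  also have "\<dots> = h0 (m a y) b" using h0_tot[of b y a] by blast
  also have "\<dots> = h0 b (m a y)" by (rule h_sym(1))
  finally show ?thesis .
qed
lemma h1L: "h1 a (m b y) = h1 b (m a y)"
proof -
  have "h1 a (m b y) = h1 (m b y) a" by (rule h_sym(2))
  also have "\<dots> = h1 (m a y) b" using h1_tot[of b y a] by blast
  also have "\<dots> = h1 b (m a y)" by (rule h_sym(2))
  finally show ?thesis .
qed


lemma G1: "g0 p (m (m q c) z) = g0 q (m (m p c) z)"
proof -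
  have "g0 p (m (m q c) z) = g0 (m q c) (m p z)" by (rule gL)
  also have "\<dots> = g0 q (m (m p z) c)" by (rule g_inv(1))
  also have "\<dots> = g0 q (m (m p c) z)" by (simp only: RC)
  finally show ?thesis .
qed

lemma F0: "f0 a (m (m a b) z) = 0"
proof -
  have "f0 a (m (m a b) z) = - f0 (m a b) (m a z)" by (rule fL)
  also have "\<dots> = - f0 a (m (m a z) b)" by (simp only: f_inv(1))
  also have "\<dots> = - f0 a (m (m a b) z)" by (simp only: RC)
  finally show ?thesis by simp
qed

lemma hN1: "h0 w (m x (m y c)) = h0 w (m (m y x) c)"
proof -
  have "h0 w (m x (m y c)) = h0 (m x (m y c)) w" by (rule h_sym)
  also have "\<dots> = h0 (m (m y c) x) w" using h0_tot[of x "m y c" w] by blast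
  also have "\<dots> = h0 (m (m y x) c) w" by (simp only: RC)
  also have "\<dots> = h0 w (m (m y x) c)" by (rule h_sym)
  finally show ?thesis .
qed

lemma hN2: "h0 w (m (m x y) c) = h0 w (m (m y x) c)"
proof -
  have "h0 w (m (m x y) c) = h0 (m x y) (m w c)" by (rule hL)
  also have "\<dots> = h0 (m y x) (m w c)" using h0_tot[of x y "m w c"] by blast
  also have "\<dots> = h0 w (m (m y x) c)" by (rule hL)
  finally show ?thesis .
qed

lemma hA: "h0 (m a c) y = h0 a (m y c)"
  using h_sym(1)[of "m a c" y] hL[of y a c] by simp

lemma hB: "h0 x (m a b) = h0 a (m b x)"
proof -
  have "h0 x (m a b) = h0 (m a b) x" by (rule h_sym)
  also have "\<dots> = h0 (m b x) a" using h0_tot[of a b x] by blast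
  also have "\<dots> = h0 a (m b x)" by (rule h_sym)
  finally show ?thesis .
qed

lemma hC: "h0 (m a b) x = h0 (m a x) b" using h0_tot[of a b x] by blast

lemma gN: "g0 p (m p (m z c)) = g0 (m p c) (m p z) - g0 z (m (m p p) c) + g0 z (m p (m p c))"
proof -
  have "g0 p (m p (m z c)) = g0 p (m (m p z) c - m (m z p) c + m z (m p c))"
    by (subst LS) (rule refl)
  also have "\<dots> = g0 p (m (m p z) c) - g0 p (m (m z p) c) + g0 p (m z (m p c))"
    by (simp only: lin_simps)
  also have "g0 p (m (m p z) c) = g0 (m p c) (m p z)"
    using g_inv(1)[of "m p z" c p] g_sym(1)[of p "m (m p z) c"] g_sym(1)[of "m p z" "m p c"] by simp
  also have "g0 p (m (m z p) c) = g0 z (m (m p p) c)"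
    using g_inv(1)[of "m z p" c p] g_sym(1)[of p "m (m z p) c"] g_inv(1)[of z p "m p c"] RC[of p c p]
      g_sym(1)[of "m z p" "m p c"] by simp
  also have "g0 p (m z (m p c)) = g0 z (m p (m p c))" by (rule gL)
  finally show ?thesis .
qed

lemma fN: "f0 a (m p (m z c)) = f0 z (m p (m a c)) - f0 z (m a (m p c))"
proof -
  have cyc: "f0 (m p z) y = - f0 z (m p y) + f0 z (m y p)" for y
  proof -
    have "f0 (m p z) y + f0 (m z y) p + f0 (m y p) z = 0" by (rule f_cyc(1))
    moreover have "f0 (m z y) p = f0 z (m p y)" by (rule f_inv(1))
    moreover have "f0 (m y p) z = - f0 z (m y p)" by (rule f_skew(1))
    ultimately show ?thesis by (simp add: algebra_simps eq_neg_iff_add_eq_0)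
  qed
  have "f0 a (m p (m z c)) = f0 a (m (m p z) c - m (m z p) c + m z (m p c))"
    by (subst LS) (rule refl)
  also have "\<dots> = f0 a (m (m p z) c) - f0 a (m (m z p) c) + f0 a (m z (m p c))"
    by (simp only: lin_simps)
  also have "f0 a (m (m p z) c) = f0 z (m p (m a c)) - f0 z (m (m a c) p)"
    using fL[of a "m p z" c] cyc[of "m a c"] by simp
  also have "f0 a (m (m z p) c) = - f0 z (m (m a c) p)"
    using fL[of a "m z p" c] f_inv(1)[of z p "m a c"] by simp
  also have "f0 a (m z (m p c)) = - f0 z (m a (m p c))" by (rule fL)
  finally show ?thesis by simp
qed


lemma alg_H2:
  "1/3 * (g0 z (m p (m p c)) + g0 p (m z (m p c)) + g0 p (m p (m z c)))
 + 1/3 * (f0 z1 (m p (m p c)) + f0 p1 (m z (m p c)) + f0 p1 (m p (m z c)))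
 + 1/3 * (h0 (m z c) (m p p2) + h0 (m p c) (m z p2) + h0 (m p c) (m p z2))
 + 1/6 * (g0 (m z c) (m p p) + g0 (m p c) (m z p) + g0 (m p c) (m p z))
 + 1/6 * (h0 (m z1 c) (m p1 p) + h0 (m p1 c) (m z1 p) + h0 (m p1 c) (m p1 z))
 = g0 (m p (m p c)) z + 1/2 * g0 (m p c) (m p z) + f0 (m p1 (m p c)) z + h0 (m p2 (m p c)) z
   + 1/2 * h0 (m (m p1 c) p1) z
   + (1/3 * (f0 z1 (m p (m p c)) + f0 z (m p1 (m p c)) + f0 z (m p (m p1 c)))
 + 1/3 * (h0 z2 (m p (m p c)) + h0 z1 (m p1 (m p c)) + h0 z1 (m p (m p1 c)))
 - 1/3 * (h0 z1 (m p1 (m p c)) + h0 z1 (m p (m p1 c)) + h0 z (m p2 (m p c)) + 2 * h0 z (m p1 (m p1 c)) + h0 z (m p (m p2 c)))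
 + 1/6 * (h0 z1 (m (m p1 p) c) + h0 z (m (m p2 p) c) + h0 z (m (m p1 p1) c))
 + 1/6 * (h0 (m p1 (m p1 c)) z + h0 (m p (m p2 c)) z + h0 (m p (m p1 c)) z1))"
proof -
  have e1: "g0 p (m z (m p c)) = g0 z (m p (m p c))" by (rule gL)
  have e2: "g0 p (m p (m z c)) = g0 (m p c) (m p z) - g0 z (m (m p p) c) + g0 z (m p (m p c))" by (rule gN)
  have e3: "g0 (m z c) (m p p) = g0 z (m (m p p) c)" by (rule g_inv)
  have e4: "g0 (m p c) (m z p) = g0 z (m (m p p) c)"
    using g_sym(1)[of "m p c" "m z p"] g_inv(1)[of z p "m p c"] RC[of p c p] by simp
  have e5: "g0 (m p (m p c)) z = g0 z (m p (m p c))" by (rule g_sym)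
  have e6: "f0 p1 (m z (m p c)) = - f0 z (m p1 (m p c))" by (rule fL)
  have e7: "f0 p1 (m p (m z c)) = f0 z (m p (m p1 c)) - f0 z (m p1 (m p c))" by (rule fN)
  have e8: "f0 (m p1 (m p c)) z = - f0 z (m p1 (m p c))" by (rule f_skew)
  have e9: "h0 (m z c) (m p p2) = h0 z (m (m p p2) c)" by (rule hA)
  have e10: "h0 (m p c) (m z p2) = h0 z (m (m p p2) c)" using hB[of "m p c" z p2] hN1[of z p2 p c] by simp
  have e11: "h0 (m p c) (m p z2) = h0 z2 (m p (m p c))" using hB[of "m p c" p z2] hL[of p z2 "m p c"] by simp
  have e12: "h0 (m z1 c) (m p1 p) = h0 z1 (m (m p1 p) c)" by (rule hA)
  have e13: "h0 (m p1 c) (m z1 p) = h0 z1 (m (m p1 p) c)" using hB[of "m p1 c" z1 p] hN1[of z1 p p1 c] by simp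
  have e14: "h0 (m p1 c) (m p1 z) = h0 z (m (m p1 p1) c)"
    using hB[of "m p1 c" p1 z] hL[of p1 z "m p1 c"] hN1[of z p1 p1 c] by simp
  have e15: "h0 (m p2 (m p c)) z = h0 z (m (m p p2) c)" using h_sym(1)[of "m p2 (m p c)" z] hN1[of z p2 p c] by simp
  have e16: "h0 (m (m p1 c) p1) z = h0 z (m (m p1 p1) c)" using h_sym(1)[of "m (m p1 c) p1" z] RC[of p1 c p1] by simp
  have e17: "h0 z (m p2 (m p c)) = h0 z (m (m p p2) c)" by (rule hN1)
  have e18: "h0 z (m p1 (m p1 c)) = h0 z (m (m p1 p1) c)" by (rule hN1)
  have e20: "h0 z (m (m p2 p) c) = h0 z (m (m p p2) c)" by (rule hN2)
  have e19: "h0 z (m p (m p2 c)) = h0 z (m (m p p2) c)" using hN1[of z p p2 c] e20 by simp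
  have e21: "h0 (m p1 (m p1 c)) z = h0 z (m (m p1 p1) c)" using h_sym(1)[of "m p1 (m p1 c)" z] e18 by simp
  have e22: "h0 (m p (m p2 c)) z = h0 z (m (m p p2) c)" using h_sym(1)[of "m p (m p2 c)" z] e19 by simp
  have e23: "h0 (m p (m p1 c)) z1 = h0 z1 (m (m p1 p) c)" using h_sym(1)[of "m p (m p1 c)" z1] hN1[of z1 p p1 c] by simp
  show ?thesis
    unfolding e1 e2 e3 e4 e5 e6 e7 e8 e9 e10 e11 e12 e13 e14 e15 e16 e17 e18 e19 e20 e21 e22 e23
    by (simp add: field_simps)
qed


lemma alg_H1g:
  fixes g f h :: "complex ^ 'n \<Rightarrow> complex ^ 'n \<Rightarrow> complex"
  assumes gs: "\<And>a b. g a b = g b a" and gi: "\<And>a b d. g (m a b) d = g a (m d b)"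
    and fs: "\<And>a b. f a b = - f b a" and fi: "\<And>a b d. f (m a b) d = f a (m d b)"
    and hs: "\<And>a b. h a b = h b a" and hi: "\<And>a b y. h a (m b y) = h b (m a y)"
  shows "1/2 * (g z (m p c) + g p (m z c)) + 1/2 * (f z1 (m p c) + f p1 (m z c))
    + 1/2 * (h z2 (m p c) + h p2 (m z c))
   = g (m p c) z + f (m p1 c) z + h (m p2 c) z
    + (1/2 * (f z1 (m p c) + f z (m p1 c)) + 1/2 * (h z2 (m p c) + h z1 (m p1 c))
       - 1/2 * (h z1 (m p1 c) + h z (m p2 c)))"
proof -
  have e1: "g p (m z c) = g z (m p c)" using gs[of p "m z c"] gi[of z c p] by simp
  have e2: "g (m p c) z = g z (m p c)" by (rule gs)
  have e3: "f p1 (m z c) = - f z (m p1 c)" using fs[of p1 "m z c"] fi[of z c p1] by simp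
  have e4: "f (m p1 c) z = - f z (m p1 c)" by (rule fs)
  have e5: "h p2 (m z c) = h z (m p2 c)" by (rule hi)
  have e6: "h (m p2 c) z = h z (m p2 c)" by (rule hs)
  show ?thesis unfolding e1 e2 e3 e4 e5 e6 by (simp add: field_simps)
qed

lemmas alg_H1 = alg_H1g[OF g_sym(1) g_inv(1) f_skew(1) f_inv(1) h_sym(1) hL]
lemmas alg_H1' = alg_H1g[OF g_sym(2) g_inv(2) f_skew(2) f_inv(2) h_sym(2) h1L]

lemma Rst_g0: "Rst m b (tl g0 a) = tl g0 (m a b)"
  by (rule vec_eq_pair) (simp add: gL[of a _ b] g_sym(1)[of _ "m a b"])
lemma Rst_f0: "Rst m b (tl f0 a) = tl f0 (m a b)"
  by (rule vec_eq_pair) (simp add: fL[of a _ b] f_skew(1)[of _ "m a b"])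
lemma Rst_h0: "Rst m b (tl h0 a) = tl h0 (m a b)"
  by (rule vec_eq_pair) (simp add: hL[of a _ b] h_sym(1)[of _ "m a b"])
lemma Lst_f0: "Lst m (m a b) (tl f0 a) = 0"
  by (rule vec_eq_pair) (simp add: F0)
lemma Lst_h0: "Lst m a (tl h0 b) = tl h0 (m a b)"
  by (rule vec_eq_pair) (simp add: h_sym(1)[of b "m a _"] hC[of a b])
lemma Lst_g0: "Lst m (m q c) (tl g0 p) = Lst m (m p c) (tl g0 q)"
  by (rule vec_eq_pair) (simp add: G1[of p q c])


section \<open>Loops and Lambda\<close>

lemma loops_smg: "\<gamma> \<in> loops \<Longrightarrow> smg \<gamma>" by (simp add: loops_iff)
lemma loops_per: "\<gamma> \<in> loops \<Longrightarrow> \<gamma> (x + 1) = \<gamma> x" by (simp add: loops_iff per_def)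
lemma loops_Dg: "\<gamma> \<in> loops \<Longrightarrow> Dg \<gamma> \<in> loops"
  by (simp add: loops_iff per_Dg smg_diff)
lemma loopsI: "smg \<gamma> \<Longrightarrow> (\<And>x. \<gamma> (x + 1) = \<gamma> x) \<Longrightarrow> \<gamma> \<in> loops"
  by (simp add: loops_iff per_def)

lemma Lam_Dg: "Lam g0 f0 h0 \<gamma> = (\<lambda>x. tl g0 (\<gamma> x) + tl f0 (Dg \<gamma> x) + tl h0 (Dg (Dg \<gamma>) x))"
  by (simp add: Lam_def D_Dg)

lemma Lam_loops: "\<gamma> \<in> loops \<Longrightarrow> Lam g0 f0 h0 \<gamma> \<in> loops"
  using Lam_bij by (auto simp: bij_betw_def)

lemma Linv_loops: "y \<in> loops \<Longrightarrow> Lam_inv g0 f0 h0 y \<in> loops"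
  unfolding Lam_inv_def using Lam_bij unfolding bij_betw_def by (auto intro: inv_into_into)

lemma Lam_Linv: "y \<in> loops \<Longrightarrow> Lam g0 f0 h0 (Lam_inv g0 f0 h0 y) = y"
  unfolding Lam_inv_def using Lam_bij by (simp add: bij_betw_def f_inv_into_f)

lemma Linv_eq: "\<gamma> \<in> loops \<Longrightarrow> Lam g0 f0 h0 \<gamma> = y \<Longrightarrow> Lam_inv g0 f0 h0 y = \<gamma>"
  unfolding Lam_inv_def using Lam_bij by (auto simp: bij_betw_def inv_into_f_f)

lemma selfadj:
  assumes z: "z \<in> loops" and g: "\<gamma> \<in> loops"
  shows "integral {0..1} (\<lambda>x. pair (Lam g0 f0 h0 z x) (\<gamma> x)) = integral {0..1} (\<lambda>x. pair (Lam g0 f0 h0 \<gamma> x) (z x))"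
proof (rule int_eq_D)
  have sz: "smg z" "smg (Dg z)" "smg (Dg (Dg z))" "smg \<gamma>" "smg (Dg \<gamma>)" "smg (Dg (Dg \<gamma>))"
    using z g by (simp_all add: loops_smg)
  show "pair (Lam g0 f0 h0 z x) (\<gamma> x) = pair (Lam g0 f0 h0 \<gamma> x) (z x)
     + Dg (\<lambda>x. f0 (z x) (\<gamma> x) + h0 (Dg z x) (\<gamma> x) - h0 (z x) (Dg \<gamma> x)) x" for x
    using sz by (simp add: Lam_Dg g_sym(1)[of "\<gamma> x"] f_skew(1)[of "Dg \<gamma> x"] h_sym(1)[of "Dg (Dg \<gamma>) x"])
  show "continuous_on {0..1} (\<lambda>x. pair (Lam g0 f0 h0 \<gamma> x) (z x))"
    using sz by (intro smg_cont) (simp add: Lam_Dg)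
  show "per (\<lambda>x. f0 (z x) (\<gamma> x) + h0 (Dg z x) (\<gamma> x) - h0 (z x) (Dg \<gamma> x))"
    using z g by (simp add: per_def loops_per loops_Dg)
  show "smg (\<lambda>x. f0 (z x) (\<gamma> x) + h0 (Dg z x) (\<gamma> x) - h0 (z x) (Dg \<gamma> x))"
    using sz by simp
qed


lemma Linv_lin:
  assumes u: "u \<in> loops" and w: "w \<in> loops"
  shows "Lam_inv g0 f0 h0 (\<lambda>x. u x + e *s w x)
       = (\<lambda>x. Lam_inv g0 f0 h0 u x + e *s Lam_inv g0 f0 h0 w x)"
proof (rule Linv_eq)
  let ?v = "Lam_inv g0 f0 h0 u" and ?z = "Lam_inv g0 f0 h0 w"
  have l: "?v \<in> loops" "?z \<in> loops" using u w by (simp_all add: Linv_loops)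
  have s: "smg ?v" "smg (Dg ?v)" "smg ?z" "smg (Dg ?z)" using l by (simp_all add: loops_smg)
  show "(\<lambda>x. ?v x + e *s ?z x) \<in> loops"
    using l s by (intro loopsI) (simp_all add: loops_per)
  have "Lam g0 f0 h0 (\<lambda>x. ?v x + e *s ?z x) = (\<lambda>x. Lam g0 f0 h0 ?v x + e *s Lam g0 f0 h0 ?z x)"
    using s by (simp add: Lam_Dg algebra_simps)
  then show "Lam g0 f0 h0 (\<lambda>x. ?v x + e *s ?z x) = (\<lambda>x. u x + e *s w x)"
    using u w by (simp add: Lam_Linv)
qed

lemma hvd_master:
  fixes Hd :: "complex ^ 'n \<Rightarrow> complex ^ 'n \<Rightarrow> complex ^ 'n \<Rightarrow> complex"
  assumes u: "u \<in> loops" and g: "\<gamma> \<in> loops"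
    and H: "\<And>z. z \<in> loops \<Longrightarrow>
      ((\<lambda>e. integral {0..1} (\<lambda>x. Hd (Lam_inv g0 f0 h0 u x + e *s z x)
          (Dg (Lam_inv g0 f0 h0 u) x + e *s Dg z x) (Dg (Dg (Lam_inv g0 f0 h0 u)) x + e *s Dg (Dg z) x)))
       has_field_derivative integral {0..1} (\<lambda>x. pair (Lam g0 f0 h0 \<gamma> x) (z x))) (at 0)"
  shows "has_var_deriv (functional_v g0 f0 h0 Hd) u \<gamma>"
  unfolding has_var_deriv_def
proof (intro conjI ballI g)
  fix w :: "real \<Rightarrow> complex ^ 'n" assume w: "w \<in> loops"
  let ?v = "Lam_inv g0 f0 h0 u" and ?z = "Lam_inv g0 f0 h0 w"
  have l: "?v \<in> loops" "?z \<in> loops" using u w by (simp_all add: Linv_loops)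
  have s: "smg ?v" "smg (Dg ?v)" "smg ?z" "smg (Dg ?z)" using l by (simp_all add: loops_smg)
  have eq: "functional_v g0 f0 h0 Hd (\<lambda>x. u x + e *s w x) =
     integral {0..1} (\<lambda>x. Hd (?v x + e *s ?z x) (Dg ?v x + e *s Dg ?z x) (Dg (Dg ?v) x + e *s Dg (Dg ?z) x))" for e
    unfolding functional_v_def Let_def Linv_lin[OF u w] D_Dg using s by simp
  have "integral {0..1} (\<lambda>x. pair (w x) (\<gamma> x)) = integral {0..1} (\<lambda>x. pair (Lam g0 f0 h0 ?z x) (\<gamma> x))"
    using w by (simp add: Lam_Linv)
  also have "\<dots> = integral {0..1} (\<lambda>x. pair (Lam g0 f0 h0 \<gamma> x) (?z x))"
    by (rule selfadj[OF l(2) g])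
  finally show "((\<lambda>e. functional_v g0 f0 h0 Hd (\<lambda>x. u x + e *s w x)) has_field_derivative
      integral {0..1} (\<lambda>x. pair (w x) (\<gamma> x))) (at 0)"
    unfolding eq using H[OF l(2)] by simp
qed


lemma tl_zero [simp]: "cbilin_form q \<Longrightarrow> tl q 0 = 0"
  using tl_sc[of q 0 0] by simp

section \<open>First variational derivatives\<close>

lemma hvd_H0:
  assumes u: "u \<in> loops"
  shows "has_var_deriv (functional_v g0 f0 h0 (\<lambda>v vx vxx. g0 c v)) u (\<lambda>x. c)"
proof (rule hvd_master[OF u])
  show "(\<lambda>x. c) \<in> loops" by (intro loopsI) simp_all
  fix z :: "real \<Rightarrow> complex ^ 'n" assume z: "z \<in> loops"
  let ?v = "Lam_inv g0 f0 h0 u"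
  have l: "?v \<in> loops" using u by (simp add: Linv_loops)
  have s: "smg ?v" "smg z" using l z by (simp_all add: loops_smg)
  have "cub (\<lambda>e x. g0 c (?v x + e *s z x)) (\<lambda>x. g0 c (z x))"
    unfolding cub_def
    by (rule exI[of _ "\<lambda>x. g0 c (?v x)"], rule exI[of _ "\<lambda>x. 0"], rule exI[of _ "\<lambda>x. 0"])
       (use s in \<open>auto intro!: smg_cont\<close>)
  from cub_deriv[OF this]
  show "((\<lambda>e. integral {0..1} (\<lambda>x. g0 c (?v x + e *s z x))) has_field_derivative
       integral {0..1} (\<lambda>x. pair (Lam g0 f0 h0 (\<lambda>x. c) x) (z x))) (at 0)"
    by (simp add: Lam_Dg)
qed

lemma hvd_H1:
  assumes u: "u \<in> loops"
  shows "has_var_deriv (functional_v g0 f0 h0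
     (\<lambda>v vx vxx. 1/2 * g0 v (m v c) + 1/2 * f0 vx (m v c) + 1/2 * h0 vxx (m v c))) u
     (\<lambda>x. m (Lam_inv g0 f0 h0 u x) c)"
proof (rule hvd_master[OF u])
  let ?v = "Lam_inv g0 f0 h0 u"
  have l: "?v \<in> loops" using u by (simp add: Linv_loops)
  have sv: "smg ?v" "smg (Dg ?v)" "smg (Dg (Dg ?v))" "smg (Dg (Dg (Dg ?v)))"
    using l by (simp_all add: loops_smg)
  show "(\<lambda>x. m (?v x) c) \<in> loops" using l sv
    by (intro loopsI) (simp_all add: loops_per)
  fix z :: "real \<Rightarrow> complex ^ 'n" assume z: "z \<in> loops"
  have sz: "smg z" "smg (Dg z)" "smg (Dg (Dg z))" "smg (Dg (Dg (Dg z)))"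
    using z by (simp_all add: loops_smg)
  have t1: "cub (\<lambda>e x. g0 (?v x + e *s z x) (m (?v x + e *s z x) c))
      (\<lambda>x. g0 (z x) (m (?v x) c) + g0 (?v x) (m (z x) c))"
    by (rule cub_bi[where T="\<lambda>a b. g0 a (m b c)"]) (use sv sz in \<open>auto intro!: smg_cont\<close>)
  have t2: "cub (\<lambda>e x. f0 (Dg ?v x + e *s Dg z x) (m (?v x + e *s z x) c))
      (\<lambda>x. f0 (Dg z x) (m (?v x) c) + f0 (Dg ?v x) (m (z x) c))"
    by (rule cub_bi[where T="\<lambda>a b. f0 a (m b c)"]) (use sv sz in \<open>auto intro!: smg_cont\<close>)
  have t3: "cub (\<lambda>e x. h0 (Dg (Dg ?v) x + e *s Dg (Dg z) x) (m (?v x + e *s z x) c))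
      (\<lambda>x. h0 (Dg (Dg z) x) (m (?v x) c) + h0 (Dg (Dg ?v) x) (m (z x) c))"
    by (rule cub_bi[where T="\<lambda>a b. h0 a (m b c)"]) (use sv sz in \<open>auto intro!: smg_cont\<close>)
  have d: "((\<lambda>e. integral {0..1} (\<lambda>x.
        1/2 * g0 (?v x + e *s z x) (m (?v x + e *s z x) c)
      + 1/2 * f0 (Dg ?v x + e *s Dg z x) (m (?v x + e *s z x) c)
      + 1/2 * h0 (Dg (Dg ?v) x + e *s Dg (Dg z) x) (m (?v x + e *s z x) c)))
     has_field_derivative integral {0..1} (\<lambda>x.
        1/2 * (g0 (z x) (m (?v x) c) + g0 (?v x) (m (z x) c))
      + 1/2 * (f0 (Dg z x) (m (?v x) c) + f0 (Dg ?v x) (m (z x) c))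
      + 1/2 * (h0 (Dg (Dg z) x) (m (?v x) c) + h0 (Dg (Dg ?v) x) (m (z x) c)))) (at 0)"
    by (intro cub_deriv cub_add cub_cmul t1 t2 t3)
  have i: "integral {0..1} (\<lambda>x.
        1/2 * (g0 (z x) (m (?v x) c) + g0 (?v x) (m (z x) c))
      + 1/2 * (f0 (Dg z x) (m (?v x) c) + f0 (Dg ?v x) (m (z x) c))
      + 1/2 * (h0 (Dg (Dg z) x) (m (?v x) c) + h0 (Dg (Dg ?v) x) (m (z x) c)))
    = integral {0..1} (\<lambda>x. pair (Lam g0 f0 h0 (\<lambda>x. m (?v x) c) x) (z x))"
  proof (rule int_eq_D)
    show "continuous_on {0..1} (\<lambda>x. pair (Lam g0 f0 h0 (\<lambda>x. m (?v x) c) x) (z x))"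
      using sv sz by (intro smg_cont) (simp add: Lam_Dg)
    let ?\<Phi> = "\<lambda>x. 1/2 * f0 (z x) (m (?v x) c) + 1/2 * h0 (Dg z x) (m (?v x) c) - 1/2 * h0 (z x) (m (Dg ?v x) c)"
    show "per ?\<Phi>" using l z by (simp add: per_def loops_per loops_Dg)
    show "smg ?\<Phi>" using sv sz by simp
    fix x
    show "1/2 * (g0 (z x) (m (?v x) c) + g0 (?v x) (m (z x) c))
      + 1/2 * (f0 (Dg z x) (m (?v x) c) + f0 (Dg ?v x) (m (z x) c))
      + 1/2 * (h0 (Dg (Dg z) x) (m (?v x) c) + h0 (Dg (Dg ?v) x) (m (z x) c))
      = pair (Lam g0 f0 h0 (\<lambda>x. m (?v x) c) x) (z x) + Dg ?\<Phi> x"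
      using sv sz alg_H1[of "z x" "?v x" c "Dg z x" "Dg ?v x" "Dg (Dg z) x" "Dg (Dg ?v) x"]
      by (simp add: Lam_Dg)
  qed
  show "((\<lambda>e. integral {0..1} (\<lambda>x.
        1/2 * g0 (?v x + e *s z x) (m (?v x + e *s z x) c)
      + 1/2 * f0 (Dg ?v x + e *s Dg z x) (m (?v x + e *s z x) c)
      + 1/2 * h0 (Dg (Dg ?v) x + e *s Dg (Dg z) x) (m (?v x + e *s z x) c)))
     has_field_derivative integral {0..1} (\<lambda>x. pair (Lam g0 f0 h0 (\<lambda>x. m (?v x) c) x) (z x))) (at 0)"
    using d unfolding i .
qed


definition E2 :: "complex ^ 'n \<Rightarrow> (real \<Rightarrow> complex ^ 'n) \<Rightarrow> real \<Rightarrow> complex ^ 'n" where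
  "E2 c v = (\<lambda>x. tl g0 (m (v x) (m (v x) c)) + (1/2) *s Lst m (v x) (tl g0 (m (v x) c))
     + tl f0 (m (Dg v x) (m (v x) c)) + tl h0 (m (Dg (Dg v) x) (m (v x) c))
     + (1/2) *s tl h0 (m (m (Dg v x) c) (Dg v x))
     + tl g1 (m (v x) c) + tl f1 (m (Dg v x) c) + tl h1 (m (Dg (Dg v) x) c))"

lemma E2_loops: "v \<in> loops \<Longrightarrow> E2 c v \<in> loops"
  unfolding E2_def
  by (intro loopsI) (simp_all add: loops_smg loops_Dg loops_per)

lemma hvd_H2:
  assumes u: "u \<in> loops"
  shows "has_var_deriv (functional_v g0 f0 h0
     (\<lambda>v vx vxx. 1/3 * g0 v (m v (m v c)) + 1/3 * f0 vx (m v (m v c))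
                 + 1/3 * h0 (m v c) (m v vxx) + 1/6 * g0 (m v c) (m v v)
                 + 1/6 * h0 (m vx c) (m vx v)
                 + 1/2 * g1 v (m v c) + 1/2 * f1 vx (m v c) + 1/2 * h1 vxx (m v c))) u
     (Lam_inv g0 f0 h0 (E2 c (Lam_inv g0 f0 h0 u)))"
proof (rule hvd_master[OF u])
  let ?v = "Lam_inv g0 f0 h0 u"
  have l: "?v \<in> loops" using u by (simp add: Linv_loops)
  have sv: "smg ?v" "smg (Dg ?v)" "smg (Dg (Dg ?v))" "smg (Dg (Dg (Dg ?v)))"
    using l by (simp_all add: loops_smg loops_Dg)
  have El: "E2 c ?v \<in> loops" using l by (rule E2_loops)
  show "Lam_inv g0 f0 h0 (E2 c ?v) \<in> loops" using El by (rule Linv_loops)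
  have LE: "Lam g0 f0 h0 (Lam_inv g0 f0 h0 (E2 c ?v)) = E2 c ?v" using El by (rule Lam_Linv)
  fix z :: "real \<Rightarrow> complex ^ 'n" assume z: "z \<in> loops"
  have sz: "smg z" "smg (Dg z)" "smg (Dg (Dg z))" "smg (Dg (Dg (Dg z)))"
    using z by (simp_all add: loops_smg loops_Dg)
  have t1: "cub (\<lambda>e x. g0 (?v x + e *s z x) (m (?v x + e *s z x) (m (?v x + e *s z x) c)))
      (\<lambda>x. g0 (z x) (m (?v x) (m (?v x) c)) + g0 (?v x) (m (z x) (m (?v x) c)) + g0 (?v x) (m (?v x) (m (z x) c)))"
    by (rule cub_tri[where T="\<lambda>a b d. g0 a (m b (m d c))"]) (use sv sz in \<open>auto intro!: smg_cont\<close>)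
  have t2: "cub (\<lambda>e x. f0 (Dg ?v x + e *s Dg z x) (m (?v x + e *s z x) (m (?v x + e *s z x) c)))
      (\<lambda>x. f0 (Dg z x) (m (?v x) (m (?v x) c)) + f0 (Dg ?v x) (m (z x) (m (?v x) c)) + f0 (Dg ?v x) (m (?v x) (m (z x) c)))"
    by (rule cub_tri[where T="\<lambda>a b d. f0 a (m b (m d c))"]) (use sv sz in \<open>auto intro!: smg_cont\<close>)
  have t3: "cub (\<lambda>e x. h0 (m (?v x + e *s z x) c) (m (?v x + e *s z x) (Dg (Dg ?v) x + e *s Dg (Dg z) x)))
      (\<lambda>x. h0 (m (z x) c) (m (?v x) (Dg (Dg ?v) x)) + h0 (m (?v x) c) (m (z x) (Dg (Dg ?v) x)) + h0 (m (?v x) c) (m (?v x) (Dg (Dg z) x)))"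
    by (rule cub_tri[where T="\<lambda>a b d. h0 (m a c) (m b d)"]) (use sv sz in \<open>auto intro!: smg_cont\<close>)
  have t4: "cub (\<lambda>e x. g0 (m (?v x + e *s z x) c) (m (?v x + e *s z x) (?v x + e *s z x)))
      (\<lambda>x. g0 (m (z x) c) (m (?v x) (?v x)) + g0 (m (?v x) c) (m (z x) (?v x)) + g0 (m (?v x) c) (m (?v x) (z x)))"
    by (rule cub_tri[where T="\<lambda>a b d. g0 (m a c) (m b d)"]) (use sv sz in \<open>auto intro!: smg_cont\<close>)
  have t5: "cub (\<lambda>e x. h0 (m (Dg ?v x + e *s Dg z x) c) (m (Dg ?v x + e *s Dg z x) (?v x + e *s z x)))
      (\<lambda>x. h0 (m (Dg z x) c) (m (Dg ?v x) (?v x)) + h0 (m (Dg ?v x) c) (m (Dg z x) (?v x)) + h0 (m (Dg ?v x) c) (m (Dg ?v x) (z x)))"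
    by (rule cub_tri[where T="\<lambda>a b d. h0 (m a c) (m b d)"]) (use sv sz in \<open>auto intro!: smg_cont\<close>)
  have t6: "cub (\<lambda>e x. g1 (?v x + e *s z x) (m (?v x + e *s z x) c))
      (\<lambda>x. g1 (z x) (m (?v x) c) + g1 (?v x) (m (z x) c))"
    by (rule cub_bi[where T="\<lambda>a b. g1 a (m b c)"]) (use sv sz in \<open>auto intro!: smg_cont\<close>)
  have t7: "cub (\<lambda>e x. f1 (Dg ?v x + e *s Dg z x) (m (?v x + e *s z x) c))
      (\<lambda>x. f1 (Dg z x) (m (?v x) c) + f1 (Dg ?v x) (m (z x) c))"
    by (rule cub_bi[where T="\<lambda>a b. f1 a (m b c)"]) (use sv sz in \<open>auto intro!: smg_cont\<close>)
  have t8: "cub (\<lambda>e x. h1 (Dg (Dg ?v) x + e *s Dg (Dg z) x) (m (?v x + e *s z x) c))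
      (\<lambda>x. h1 (Dg (Dg z) x) (m (?v x) c) + h1 (Dg (Dg ?v) x) (m (z x) c))"
    by (rule cub_bi[where T="\<lambda>a b. h1 a (m b c)"]) (use sv sz in \<open>auto intro!: smg_cont\<close>)
  let ?V = "\<lambda>x. 1/3 * (g0 (z x) (m (?v x) (m (?v x) c)) + g0 (?v x) (m (z x) (m (?v x) c)) + g0 (?v x) (m (?v x) (m (z x) c)))
     + 1/3 * (f0 (Dg z x) (m (?v x) (m (?v x) c)) + f0 (Dg ?v x) (m (z x) (m (?v x) c)) + f0 (Dg ?v x) (m (?v x) (m (z x) c)))
     + 1/3 * (h0 (m (z x) c) (m (?v x) (Dg (Dg ?v) x)) + h0 (m (?v x) c) (m (z x) (Dg (Dg ?v) x)) + h0 (m (?v x) c) (m (?v x) (Dg (Dg z) x)))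
     + 1/6 * (g0 (m (z x) c) (m (?v x) (?v x)) + g0 (m (?v x) c) (m (z x) (?v x)) + g0 (m (?v x) c) (m (?v x) (z x)))
     + 1/6 * (h0 (m (Dg z x) c) (m (Dg ?v x) (?v x)) + h0 (m (Dg ?v x) c) (m (Dg z x) (?v x)) + h0 (m (Dg ?v x) c) (m (Dg ?v x) (z x)))
     + 1/2 * (g1 (z x) (m (?v x) c) + g1 (?v x) (m (z x) c))
     + 1/2 * (f1 (Dg z x) (m (?v x) c) + f1 (Dg ?v x) (m (z x) c))
     + 1/2 * (h1 (Dg (Dg z) x) (m (?v x) c) + h1 (Dg (Dg ?v) x) (m (z x) c))"
  have d: "((\<lambda>e. integral {0..1} (\<lambda>x.
        1/3 * g0 (?v x + e *s z x) (m (?v x + e *s z x) (m (?v x + e *s z x) c))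
      + 1/3 * f0 (Dg ?v x + e *s Dg z x) (m (?v x + e *s z x) (m (?v x + e *s z x) c))
      + 1/3 * h0 (m (?v x + e *s z x) c) (m (?v x + e *s z x) (Dg (Dg ?v) x + e *s Dg (Dg z) x))
      + 1/6 * g0 (m (?v x + e *s z x) c) (m (?v x + e *s z x) (?v x + e *s z x))
      + 1/6 * h0 (m (Dg ?v x + e *s Dg z x) c) (m (Dg ?v x + e *s Dg z x) (?v x + e *s z x))
      + 1/2 * g1 (?v x + e *s z x) (m (?v x + e *s z x) c)
      + 1/2 * f1 (Dg ?v x + e *s Dg z x) (m (?v x + e *s z x) c)
      + 1/2 * h1 (Dg (Dg ?v) x + e *s Dg (Dg z) x) (m (?v x + e *s z x) c)))
     has_field_derivative integral {0..1} ?V) (at 0)"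
    by (intro cub_deriv cub_add cub_cmul t1 t2 t3 t4 t5 t6 t7 t8)
  have i: "integral {0..1} ?V = integral {0..1} (\<lambda>x. pair (E2 c ?v x) (z x))"
  proof (rule int_eq_D)
    show "continuous_on {0..1} (\<lambda>x. pair (E2 c ?v x) (z x))"
      using sv sz by (intro smg_cont) (simp add: E2_def)
    let ?\<Phi> = "\<lambda>x. 1/3 * f0 (z x) (m (?v x) (m (?v x) c)) + 1/3 * h0 (Dg z x) (m (?v x) (m (?v x) c))
      - 1/3 * h0 (z x) (m (Dg ?v x) (m (?v x) c) + m (?v x) (m (Dg ?v x) c))
      + 1/6 * h0 (z x) (m (m (Dg ?v x) (?v x)) c) + 1/6 * h0 (m (?v x) (m (Dg ?v x) c)) (z x)
      + (1/2 * f1 (z x) (m (?v x) c) + 1/2 * h1 (Dg z x) (m (?v x) c) - 1/2 * h1 (z x) (m (Dg ?v x) c))"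
    show "per ?\<Phi>" using l z by (simp add: per_def loops_per loops_Dg)
    show "smg ?\<Phi>" using sv sz by simp
    fix x
    define p where "p = ?v x"
    define p1 where "p1 = Dg ?v x"
    define p2 where "p2 = Dg (Dg ?v) x"
    define z0 where "z0 = z x"
    define z1 where "z1 = Dg z x"
    define z2 where "z2 = Dg (Dg z) x"
    have a: "?V x = (1/3 * (g0 z0 (m p (m p c)) + g0 p (m z0 (m p c)) + g0 p (m p (m z0 c)))
 + 1/3 * (f0 z1 (m p (m p c)) + f0 p1 (m z0 (m p c)) + f0 p1 (m p (m z0 c)))
 + 1/3 * (h0 (m z0 c) (m p p2) + h0 (m p c) (m z0 p2) + h0 (m p c) (m p z2))
 + 1/6 * (g0 (m z0 c) (m p p) + g0 (m p c) (m z0 p) + g0 (m p c) (m p z0))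
 + 1/6 * (h0 (m z1 c) (m p1 p) + h0 (m p1 c) (m z1 p) + h0 (m p1 c) (m p1 z0)))
 + (1/2 * (g1 z0 (m p c) + g1 p (m z0 c)) + 1/2 * (f1 z1 (m p c) + f1 p1 (m z0 c))
    + 1/2 * (h1 z2 (m p c) + h1 p2 (m z0 c)))"
      unfolding p_def p1_def p2_def z0_def z1_def z2_def by (simp only: add.assoc)
    have b: "pair (E2 c ?v x) (z x) = (g0 (m p (m p c)) z0 + 1/2 * g0 (m p c) (m p z0) + f0 (m p1 (m p c)) z0 + h0 (m p2 (m p c)) z0
   + 1/2 * h0 (m (m p1 c) p1) z0) + (g1 (m p c) z0 + f1 (m p1 c) z0 + h1 (m p2 c) z0)"
      unfolding p_def p1_def p2_def z0_def z1_def z2_def by (simp add: E2_def field_simps)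
    have c: "Dg ?\<Phi> x = (1/3 * (f0 z1 (m p (m p c)) + f0 z0 (m p1 (m p c)) + f0 z0 (m p (m p1 c)))
 + 1/3 * (h0 z2 (m p (m p c)) + h0 z1 (m p1 (m p c)) + h0 z1 (m p (m p1 c)))
 - 1/3 * (h0 z1 (m p1 (m p c)) + h0 z1 (m p (m p1 c)) + h0 z0 (m p2 (m p c)) + 2 * h0 z0 (m p1 (m p1 c)) + h0 z0 (m p (m p2 c)))
 + 1/6 * (h0 z1 (m (m p1 p) c) + h0 z0 (m (m p2 p) c) + h0 z0 (m (m p1 p1) c))
 + 1/6 * (h0 (m p1 (m p1 c)) z0 + h0 (m p (m p2 c)) z0 + h0 (m p (m p1 c)) z1))
 + (1/2 * (f1 z1 (m p c) + f1 z0 (m p1 c)) + 1/2 * (h1 z2 (m p c) + h1 z1 (m p1 c))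
       - 1/2 * (h1 z1 (m p1 c) + h1 z0 (m p2 c)))"
      unfolding p_def p1_def p2_def z0_def z1_def z2_def using sv sz by (simp add: field_simps)
    show "?V x = pair (E2 c ?v x) (z x) + Dg ?\<Phi> x"
      unfolding a b c alg_H2[of z0 p c z1 p1 p2 z2] alg_H1'[of z0 p c z1 p1 z2 p2]
      by (simp add: field_simps)
  qed
  show "((\<lambda>e. integral {0..1} (\<lambda>x.
        1/3 * g0 (?v x + e *s z x) (m (?v x + e *s z x) (m (?v x + e *s z x) c))
      + 1/3 * f0 (Dg ?v x + e *s Dg z x) (m (?v x + e *s z x) (m (?v x + e *s z x) c))
      + 1/3 * h0 (m (?v x + e *s z x) c) (m (?v x + e *s z x) (Dg (Dg ?v) x + e *s Dg (Dg z) x))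
      + 1/6 * g0 (m (?v x + e *s z x) c) (m (?v x + e *s z x) (?v x + e *s z x))
      + 1/6 * h0 (m (Dg ?v x + e *s Dg z x) c) (m (Dg ?v x + e *s Dg z x) (?v x + e *s z x))
      + 1/2 * g1 (?v x + e *s z x) (m (?v x + e *s z x) c)
      + 1/2 * f1 (Dg ?v x + e *s Dg z x) (m (?v x + e *s z x) c)
      + 1/2 * h1 (Dg (Dg ?v) x + e *s Dg (Dg z) x) (m (?v x + e *s z x) c)))
     has_field_derivative integral {0..1} (\<lambda>x. pair (Lam g0 f0 h0 (Lam_inv g0 f0 h0 (E2 c ?v)) x) (z x))) (at 0)"
    using d unfolding i LE .
qed


section \<open>The flows\<close>

definition R2 :: "complex ^ 'n \<Rightarrow> (real \<Rightarrow> complex ^ 'n) \<Rightarrow> real \<Rightarrow> complex ^ 'n" where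
  "R2 c v = (\<lambda>x. tl g0 (m (Dg v x) (m (v x) c)) + tl g0 (m (v x) (m (Dg v x) c))
                  + Lst m (m (v x) c) (tl g0 (Dg v x))
                  + tl f0 (m (Dg v x) (m (Dg v x) c)) + tl f0 (m (Dg (Dg v) x) (m (v x) c))
                  + 2 *s tl h0 (m (m (Dg v x) c) (Dg (Dg v) x))
                  + tl h0 (m (m (v x) c) (Dg (Dg (Dg v)) x))
                  + tl g1 (m (Dg v x) c) + tl f1 (m (Dg (Dg v) x) c)
                  + tl h1 (m (Dg (Dg (Dg v)) x) c))"

lemma Dg_Lam: "\<gamma> \<in> loops \<Longrightarrow> Dg (Lam g0 f0 h0 \<gamma>) = Lam g0 f0 h0 (Dg \<gamma>)"
  by (simp add: Lam_Dg loops_smg loops_Dg)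

lemma P0_Lam: "P0 g0 f0 h0 \<gamma> = Lam g0 f0 h0 (Dg \<gamma>)"
  by (simp add: P0_def Lam_def D_Dg)

lemma u_Lam: "u \<in> loops \<Longrightarrow> u = (\<lambda>x. tl g0 (Lam_inv g0 f0 h0 u x) + tl f0 (Dg (Lam_inv g0 f0 h0 u) x)
    + tl h0 (Dg (Dg (Lam_inv g0 f0 h0 u)) x))"
  using Lam_Linv[of u] by (simp add: Lam_Dg)

lemmas Rst_tl [simp] = Rst_g0 Rst_f0 Rst_h0

lemma P1_c:
  assumes u: "u \<in> loops"
  shows "P1 m g1 f1 h1 u (\<lambda>x. c) = Lam g0 f0 h0 (\<lambda>x. m (Dg (Lam_inv g0 f0 h0 u) x) c)"
proof -
  let ?v = "Lam_inv g0 f0 h0 u"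
  have l: "?v \<in> loops" using u by (simp add: Linv_loops)
  have sv: "smg ?v" "smg (Dg ?v)" "smg (Dg (Dg ?v))" "smg (Dg (Dg (Dg ?v)))"
    using l by (simp_all add: loops_smg loops_Dg)
  show ?thesis
    unfolding P1_def D_Dg
    apply (subst (1 2) u_Lam[OF u])
    using sv by (simp add: Lam_Dg)
qed

lemma DE2:
  assumes l: "v \<in> loops"
  shows "Dg (E2 c v) = R2 c v"
proof -
  have sv: "smg v" "smg (Dg v)" "smg (Dg (Dg v))" "smg (Dg (Dg (Dg v)))"
    using l by (simp_all add: loops_smg loops_Dg)
  show ?thesis
  proof (rule ext, rule vec_eq_pair)
    fix x z
    let ?p = "v x" and ?p1 = "Dg v x" and ?p2 = "Dg (Dg v) x" and ?p3 = "Dg (Dg (Dg v)) x"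
    have s1: "g0 (m ?p c) (m ?p1 z) = g0 ?p1 (m (m ?p c) z)"
      using g_sym(1)[of "m ?p c" "m ?p1 z"] g_inv(1)[of ?p1 z "m ?p c"] by simp
    have s2: "g0 (m ?p1 c) (m ?p z) = g0 ?p1 (m (m ?p c) z)"
      using g_inv(1)[of ?p1 c "m ?p z"] RC[of ?p z c] by simp
    have s3: "h0 (m ?p3 (m ?p c)) z = h0 (m (m ?p c) ?p3) z" using h0_tot[of ?p3 "m ?p c" z] by blast
    have s4: "h0 (m ?p2 (m ?p1 c)) z = h0 (m (m ?p1 c) ?p2) z" using h0_tot[of ?p2 "m ?p1 c" z] by blast
    have s5: "h0 (m (m ?p2 c) ?p1) z = h0 (m (m ?p1 c) ?p2) z"
      using h_sym(1)[of "m (m ?p2 ?p1) c" z] h_sym(1)[of "m (m ?p1 ?p2) c" z] hN2[of z ?p2 ?p1 c]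
        RC[of ?p2 c ?p1] RC[of ?p1 c ?p2] by simp
    show "pair (Dg (E2 c v) x) z = pair (R2 c v x) z"
      using sv by (simp add: E2_def R2_def s1 s2 s3 s4 s5 field_simps)
  qed
qed

lemma P1_g1:
  assumes l: "v \<in> loops"
  shows "P1 m g1 f1 h1 (Lam g0 f0 h0 v) (\<lambda>x. m (v x) c) = R2 c v"
proof -
  have sv: "smg v" "smg (Dg v)" "smg (Dg (Dg v))" "smg (Dg (Dg (Dg v)))"
    using l by (simp_all add: loops_smg loops_Dg)
  show ?thesis
  proof (rule ext, rule vec_eq_pair)
    fix x z
    let ?p = "v x" and ?p1 = "Dg v x" and ?p2 = "Dg (Dg v) x" and ?p3 = "Dg (Dg (Dg v)) x"
    have s3: "h0 (m ?p3 (m ?p c)) z = h0 (m (m ?p c) ?p3) z" using h0_tot[of ?p3 "m ?p c" z] by blast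
    have s4: "h0 (m ?p2 (m ?p1 c)) z = h0 (m (m ?p1 c) ?p2) z" using h0_tot[of ?p2 "m ?p1 c" z] by blast
    have s6: "g0 ?p (m (m ?p1 c) z) = g0 ?p1 (m (m ?p c) z)" by (rule G1)
    have s7: "f0 ?p1 (m (m ?p1 c) z) = 0" by (rule F0)
    have s8: "h0 ?p2 (m (m ?p1 c) z) = h0 (m (m ?p1 c) ?p2) z"
      using h_sym(1)[of ?p2 "m (m ?p1 c) z"] hC[of "m ?p1 c" ?p2 z] by simp
    show "pair (P1 m g1 f1 h1 (Lam g0 f0 h0 v) (\<lambda>x. m (v x) c) x) z = pair (R2 c v x) z"
      unfolding P1_def D_Dg Lam_Dg
      using sv by (simp add: R2_def s3 s4 s6 s7 s8 field_simps)
  qed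
qed


lemma R2_loops: "v \<in> loops \<Longrightarrow> R2 c v \<in> loops"
  unfolding R2_def
  by (intro loopsI) (simp_all add: loops_smg loops_Dg loops_per)

lemma main:
  fixes c :: "complex ^ 'n" and u :: "real \<Rightarrow> complex ^ 'n"
  assumes u_loop: "u \<in> loops"
  shows
    "let v = Lam_inv g0 f0 h0 u;
         H0 = (\<lambda>v vx vxx. g0 c v);
         H1 = (\<lambda>v vx vxx. 1/2 * g0 v (m v c) + 1/2 * f0 vx (m v c) + 1/2 * h0 vxx (m v c));
         H2 = (\<lambda>v vx vxx. 1/3 * g0 v (m v (m v c)) + 1/3 * f0 vx (m v (m v c))
                 + 1/3 * h0 (m v c) (m v vxx) + 1/6 * g0 (m v c) (m v v)
                 + 1/6 * h0 (m vx c) (m vx v)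
                 + 1/2 * g1 v (m v c) + 1/2 * f1 vx (m v c) + 1/2 * h1 vxx (m v c));
         \<H>0 = functional_v g0 f0 h0 H0;
         \<H>1 = functional_v g0 f0 h0 H1;
         \<H>2 = functional_v g0 f0 h0 H2
     in has_var_deriv \<H>0 u (\<lambda>x. c)
      \<and> P0 g0 f0 h0 (\<lambda>x. c) = (\<lambda>x. 0)
      \<and> (\<exists>\<gamma>1 \<gamma>2. has_var_deriv \<H>1 u \<gamma>1 \<and> has_var_deriv \<H>2 u \<gamma>2
          \<and> P1 m g1 f1 h1 u (\<lambda>x. c) = P0 g0 f0 h0 \<gamma>1
          \<and> P1 m g1 f1 h1 u \<gamma>1 = P0 g0 f0 h0 \<gamma>2
          \<and> Lam_inv g0 f0 h0 (P1 m g1 f1 h1 u (\<lambda>x. c)) = (\<lambda>x. m (D v x) c)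
          \<and> (let vt2 = Lam_inv g0 f0 h0 (P1 m g1 f1 h1 u \<gamma>1) in
             (\<forall>x. tl g0 (vt2 x) + tl f0 (D vt2 x) + tl h0 (D (D vt2) x)
                = tl g0 (m (D v x) (m (v x) c)) + tl g0 (m (v x) (m (D v x) c))
                  + Lst m (m (v x) c) (tl g0 (D v x))
                  + tl f0 (m (D v x) (m (D v x) c)) + tl f0 (m (D (D v) x) (m (v x) c))
                  + 2 *s tl h0 (m (m (D v x) c) (D (D v) x))
                  + tl h0 (m (m (v x) c) (D (D (D v)) x))
                  + tl g1 (m (D v x) c) + tl f1 (m (D (D v) x) c)
                  + tl h1 (m (D (D (D v)) x) c))))"
proof -
  let ?v = "Lam_inv g0 f0 h0 u"
  have l: "?v \<in> loops" using u_loop by (simp add: Linv_loops)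
  have sv: "smg ?v" "smg (Dg ?v)" "smg (Dg (Dg ?v))" "smg (Dg (Dg (Dg ?v)))"
    using l by (simp_all add: loops_smg loops_Dg)
  have uL: "Lam g0 f0 h0 ?v = u" using u_loop by (rule Lam_Linv)
  have g1l: "(\<lambda>x. m (Dg ?v x) c) \<in> loops"
    using l sv by (intro loopsI) (simp_all add: loops_per loops_Dg)
  have E: "E2 c ?v \<in> loops" using l by (rule E2_loops)
  have R: "R2 c ?v \<in> loops" using l by (rule R2_loops)
  have a1: "P0 g0 f0 h0 (\<lambda>x. c) = (\<lambda>x. 0)" by (simp add: P0_def D_Dg)
  have a2: "P1 m g1 f1 h1 u (\<lambda>x. c) = P0 g0 f0 h0 (\<lambda>x. m (?v x) c)"
    using sv by (simp add: P1_c[OF u_loop] P0_Lam)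
  have P1g: "P1 m g1 f1 h1 u (\<lambda>x. m (?v x) c) = R2 c ?v"
    using P1_g1[OF l, of c] uL by simp
  have a3: "P1 m g1 f1 h1 u (\<lambda>x. m (?v x) c) = P0 g0 f0 h0 (Lam_inv g0 f0 h0 (E2 c ?v))"
  proof -
    have "P0 g0 f0 h0 (Lam_inv g0 f0 h0 (E2 c ?v)) = Dg (Lam g0 f0 h0 (Lam_inv g0 f0 h0 (E2 c ?v)))"
      by (simp add: P0_Lam Dg_Lam Linv_loops E)
    also have "\<dots> = R2 c ?v" by (simp add: Lam_Linv E DE2 l)
    finally show ?thesis using P1g by simp
  qed
  have a4: "Lam_inv g0 f0 h0 (P1 m g1 f1 h1 u (\<lambda>x. c)) = (\<lambda>x. m (D ?v x) c)"
    unfolding P1_c[OF u_loop] D_Dg by (rule Linv_eq[OF g1l refl])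
  have a5: "\<forall>x. tl g0 (Lam_inv g0 f0 h0 (P1 m g1 f1 h1 u (\<lambda>x. m (?v x) c)) x)
       + tl f0 (D (Lam_inv g0 f0 h0 (P1 m g1 f1 h1 u (\<lambda>x. m (?v x) c))) x)
       + tl h0 (D (D (Lam_inv g0 f0 h0 (P1 m g1 f1 h1 u (\<lambda>x. m (?v x) c)))) x)
     = R2 c ?v x"
  proof
    fix x
    have "Lam g0 f0 h0 (Lam_inv g0 f0 h0 (R2 c ?v)) x = R2 c ?v x" by (simp add: Lam_Linv R)
    then show "tl g0 (Lam_inv g0 f0 h0 (P1 m g1 f1 h1 u (\<lambda>x. m (?v x) c)) x)
       + tl f0 (D (Lam_inv g0 f0 h0 (P1 m g1 f1 h1 u (\<lambda>x. m (?v x) c))) x)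
       + tl h0 (D (D (Lam_inv g0 f0 h0 (P1 m g1 f1 h1 u (\<lambda>x. m (?v x) c)))) x)
     = R2 c ?v x"
      unfolding P1g Lam_Dg D_Dg .
  qed
  show ?thesis
    unfolding Let_def
    apply (intro conjI hvd_H0[OF u_loop] a1)
    apply (rule exI[of _ "\<lambda>x. m (?v x) c"], rule exI[of _ "Lam_inv g0 f0 h0 (E2 c ?v)"])
    apply (intro conjI hvd_H1[OF u_loop] hvd_H2[OF u_loop] a2 a3 a4)
    using a5 by (simp add: R2_def D_Dg)
qed

end

theorem theorem3p1:
  fixes m :: "complex ^ 'n::finite \<Rightarrow> complex ^ 'n \<Rightarrow> complex ^ 'n"
    and g0 g1 f0 f1 h0 h1 :: "complex ^ 'n \<Rightarrow> complex ^ 'n \<Rightarrow> complex"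
    and c :: "complex ^ 'n"
    and u :: "real \<Rightarrow> complex ^ 'n"
  assumes nov: "novikov m"
    and g_bil: "cbilin_form g0" "cbilin_form g1"
    and g_sym: "\<And>a b. g0 a b = g0 b a" "\<And>a b. g1 a b = g1 b a"
    and g_inv: "\<And>a b d. g0 (m a b) d = g0 a (m d b)" "\<And>a b d. g1 (m a b) d = g1 a (m d b)"
    and f_bil: "cbilin_form f0" "cbilin_form f1"
    and f_skew: "\<And>a b. f0 a b = - f0 b a" "\<And>a b. f1 a b = - f1 b a"
    and f_inv: "\<And>a b d. f0 (m a b) d = f0 a (m d b)" "\<And>a b d. f1 (m a b) d = f1 a (m d b)"
    and f_cyc: "\<And>a b d. f0 (m a b) d + f0 (m b d) a + f0 (m d a) b = 0"
               "\<And>a b d. f1 (m a b) d + f1 (m b d) a + f1 (m d a) b = 0"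
    and h_bil: "cbilin_form h0" "cbilin_form h1"
    and h_sym: "\<And>a b. h0 a b = h0 b a" "\<And>a b. h1 a b = h1 b a"
    and h0_tot: "\<And>a b d. h0 (m a b) d = h0 (m a d) b \<and> h0 (m a b) d = h0 (m b a) d
                    \<and> h0 (m a b) d = h0 (m b d) a \<and> h0 (m a b) d = h0 (m d a) b
                    \<and> h0 (m a b) d = h0 (m d b) a"
    and h1_tot: "\<And>a b d. h1 (m a b) d = h1 (m a d) b \<and> h1 (m a b) d = h1 (m b a) d
                    \<and> h1 (m a b) d = h1 (m b d) a \<and> h1 (m a b) d = h1 (m d a) b
                    \<and> h1 (m a b) d = h1 (m d b) a"
    and Lam_bij: "bij_betw (Lam g0 f0 h0) loops loops"
    and u_loop: "u \<in> loops"
  shows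
    "let v = Lam_inv g0 f0 h0 u;
         H0 = (\<lambda>v vx vxx. g0 c v);
         H1 = (\<lambda>v vx vxx. 1/2 * g0 v (m v c) + 1/2 * f0 vx (m v c) + 1/2 * h0 vxx (m v c));
         H2 = (\<lambda>v vx vxx. 1/3 * g0 v (m v (m v c)) + 1/3 * f0 vx (m v (m v c))
                 + 1/3 * h0 (m v c) (m v vxx) + 1/6 * g0 (m v c) (m v v)
                 + 1/6 * h0 (m vx c) (m vx v)
                 + 1/2 * g1 v (m v c) + 1/2 * f1 vx (m v c) + 1/2 * h1 vxx (m v c));
         \<H>0 = functional_v g0 f0 h0 H0;
         \<H>1 = functional_v g0 f0 h0 H1;
         \<H>2 = functional_v g0 f0 h0 H2
     in has_var_deriv \<H>0 u (\<lambda>x. c)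
      \<and> P0 g0 f0 h0 (\<lambda>x. c) = (\<lambda>x. 0)
      \<and> (\<exists>\<gamma>1 \<gamma>2. has_var_deriv \<H>1 u \<gamma>1 \<and> has_var_deriv \<H>2 u \<gamma>2
          \<and> P1 m g1 f1 h1 u (\<lambda>x. c) = P0 g0 f0 h0 \<gamma>1
          \<and> P1 m g1 f1 h1 u \<gamma>1 = P0 g0 f0 h0 \<gamma>2
          \<and> Lam_inv g0 f0 h0 (P1 m g1 f1 h1 u (\<lambda>x. c)) = (\<lambda>x. m (D v x) c)
          \<and> (let vt2 = Lam_inv g0 f0 h0 (P1 m g1 f1 h1 u \<gamma>1) in
             (\<forall>x. tl g0 (vt2 x) + tl f0 (D vt2 x) + tl h0 (D (D vt2) x)
                = tl g0 (m (D v x) (m (v x) c)) + tl g0 (m (v x) (m (D v x) c))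
                  + Lst m (m (v x) c) (tl g0 (D v x))
                  + tl f0 (m (D v x) (m (D v x) c)) + tl f0 (m (D (D v) x) (m (v x) c))
                  + 2 *s tl h0 (m (m (D v x) c) (D (D v) x))
                  + tl h0 (m (m (v x) c) (D (D (D v)) x))
                  + tl g1 (m (D v x) c) + tl f1 (m (D (D v) x) c)
                  + tl h1 (m (D (D (D v)) x) c))))"
proof -
  interpret NS m g0 g1 f0 f1 h0 h1
    by (unfold_locales; fact assms)
  show ?thesis by (rule main[OF u_loop])
qed

end
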